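(* Let $w\in W$ be minuscule, let $w=s_{i_1}\cdots s_{i_r}$ be a reduced expression of $w$, and set $k:=i_r\in I$. Then $w$ is a strong minuscule element if and only if $k\in K$ and there exists $u\in W$ such that $w=uv_k$ and $\ell(w)=\ell(u)+n$. Moreover, in this case the unique dominant integral weight $\Lambda_w$ for which $w$ is $\Lambda_w$-minuscule is $\Lambda_w=\Lambda_k$.
   Context: Let $\mathfrak g$ be a finite-dimensional simple Lie algebra over $\mathbb C$ of type $\mathrm A_n$, $\mathrm B_n$, $\mathrm C_n$ or $\mathrm D_n$, with index set $I=\{1,\dots,n\}$, simple roots $\alpha_i$, simple coroots $\alpha_i^\vee$, Cartan matrix $a_{ij}=\langle\alpha_j,\alpha_i^\vee\rangle$, fundamental weights $\Lambda_i$, integral weights $P=\bigoplus_{i}\mathbb Z\Lambda_i$, dominant integral weights $P^+=\sum_i\mathbb Z_{\ge0}\Lambda_i$, Weyl group $W$ generated by simple reflections $s_i$, and length function $\ell$. The Dynkin diagrams are labeled as follows: type $\mathrm A_n$: the chain $1-2-\cdots-n$; type $\mathrm B_n$: the chain $1-2-\cdots-n$ with a double bond between $1$ and $2$, where $\alpha_1$ is short and $\alpha_2,\dots,\alpha_n$ are long; type $\mathrm C_n$: the chain $1-2-\cdots-n$ with a double bond between $1$ and $2$, where $\alpha_1$ is long and $\alpha_2,\dots,\alpha_n$ are short; type $\mathrm D_n$: the chain $n-(n-1)-\cdots-3$ with node $3$ additionally joined to both node $1$ and node $2$. Set $K=I$ in types $\mathrm A_n,\mathrm D_n$, $K=\{1\}$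 in type $\mathrm B_n$, and $K=I\setminus\{1\}$ in type $\mathrm C_n$. For $\Lambda\in P$, $w\in W$ is $\Lambda$-minuscule if there is a reduced expression $w=s_{i_1}\cdots s_{i_r}$ with $\langle s_{i_{p+1}}\cdots s_{i_r}(\Lambda),\alpha_{i_p}^\vee\rangle=1$ for all $1\le p\le r$; $w$ is minuscule (resp. dominant minuscule) if it is $\Lambda$-minuscule for some $\Lambda\in P$ (resp. $\Lambda\in P^+$). A dominant minuscule $w$ is strong minuscule if there is a unique $\Lambda\in P^+$ (denoted $\Lambda_w$) such that $w$ is $\Lambda$-minuscule. For $i\in K$ define $v_i\in W$ by: type $\mathrm A_n$: $v_i=s_ns_{n-1}\cdots s_{i+1}s_1s_2\cdots s_{i-1}s_i$; type $\mathrm B_n$: $v_1=s_ns_{n-1}\cdots s_2s_1$; type $\mathrm C_n$ ($2\le i\le n$): $v_i=s_ns_{n-1}\cdots s_{i+1}s_1s_2\cdots s_{i-1}s_i$; type $\mathrm D_n$: $v_1=s_2s_ns_{n-1}\cdots s_3s_1$, $v_2=s_1s_ns_{n-1}\cdots s_3s_2$, and $v_i=s_ns_{n-1}\cdots s_{i+1}s_1s_2s_3\cdots s_{i-1}s_i$ for $3\le i\le n$ (empty products omitted). In all cases $\ell(v_i)=n$. *)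

theory Defs
  imports Main
begin

text \<open>Weights are integer coordinate functions with respect to
  the fundamental weights: lambda j is the coefficient of Lambda_j, so that
  the pairing with alpha_i coroot is lambda i.\<close>

datatype ctype = TA | TB | TC | TD

definition valid_type :: "ctype \<Rightarrow> nat \<Rightarrow> bool" where
  "valid_type t n = (case t of TA \<Rightarrow> n \<ge> 1 | TB \<Rightarrow> n \<ge> 2 | TC \<Rightarrow> n \<ge> 2 | TD \<Rightarrow> n \<ge> 4)"

definition Iset :: "nat \<Rightarrow> nat set" where
  "Iset n = {1..n}"

definition adjacent :: "ctype \<Rightarrow> nat \<Rightarrow> nat \<Rightarrow> bool" where
  "adjacent t i j = (if t = TD then
       (3 \<le> i \<and> j = i + 1) \<or> (3 \<le> j \<and> i = j + 1) \<or>
       {i, j} = {1, 3} \<or> {i, j} = {2, 3}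
     else (i = j + 1 \<or> j = i + 1))"

text \<open>Cartan matrix a_ij = <alpha_j, alpha_i coroot>.\<close>
definition cartan :: "ctype \<Rightarrow> nat \<Rightarrow> nat \<Rightarrow> nat \<Rightarrow> int" where
  "cartan t n i j =
    (if i \<notin> Iset n \<or> j \<notin> Iset n then 0
     else if i = j then 2
     else if \<not> adjacent t i j then 0
     else if t = TB \<and> i = 1 \<and> j = 2 then -2
     else if t = TC \<and> i = 2 \<and> j = 1 then -2
     else -1)"

definition weights :: "nat \<Rightarrow> (nat \<Rightarrow> int) set" where
  "weights n = {lam. \<forall>j. j \<notin> Iset n \<longrightarrow> lam j = 0}"

definition dominant :: "nat \<Rightarrow> (nat \<Rightarrow> int) set" where
  "dominant n = {lam \<in> weights n. \<forall>j \<in> Iset n. lam j \<ge> 0}"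

definition fundw :: "nat \<Rightarrow> nat \<Rightarrow> int" where
  "fundw k = (\<lambda>j. if j = k then 1 else 0)"

text \<open>Simple reflection: s_i(lambda) = lambda - <lambda, alpha_i coroot> alpha_i,
  where alpha_i = sum_j a_ji Lambda_j.\<close>
definition sref :: "ctype \<Rightarrow> nat \<Rightarrow> nat \<Rightarrow> (nat \<Rightarrow> int) \<Rightarrow> (nat \<Rightarrow> int)" where
  "sref t n i lam = (\<lambda>j. lam j - lam i * cartan t n j i)"

definition wact :: "ctype \<Rightarrow> nat \<Rightarrow> nat list \<Rightarrow> (nat \<Rightarrow> int) \<Rightarrow> (nat \<Rightarrow> int)" where
  "wact t n ws = foldr (\<lambda>i f. sref t n i \<circ> f) ws id"

definition words :: "nat \<Rightarrow> nat list set" where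
  "words n = {ws. set ws \<subseteq> Iset n}"

text \<open>The Weyl group, realized faithfully via its action on the weight lattice.\<close>
definition weyl :: "ctype \<Rightarrow> nat \<Rightarrow> ((nat \<Rightarrow> int) \<Rightarrow> (nat \<Rightarrow> int)) set" where
  "weyl t n = {wact t n ws | ws. ws \<in> words n}"

definition wlen :: "ctype \<Rightarrow> nat \<Rightarrow> ((nat \<Rightarrow> int) \<Rightarrow> (nat \<Rightarrow> int)) \<Rightarrow> nat" where
  "wlen t n w = (LEAST r. \<exists>ws \<in> words n. length ws = r \<and> wact t n ws = w)"

definition reduced_expr :: "ctype \<Rightarrow> nat \<Rightarrow> nat list \<Rightarrow> ((nat \<Rightarrow> int) \<Rightarrow> (nat \<Rightarrow> int)) \<Rightarrow> bool" where
  "reduced_expr t n ws w = (ws \<in> words n \<and> wact t n ws = w \<and> length ws = wlen t n w)"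

text \<open>w is Lambda-minuscule: some reduced expression w = s_{i_1}...s_{i_r} with
  <s_{i_{p+1}}...s_{i_r} Lambda, alpha_{i_p} coroot> = 1 for all p (0-indexed q = p-1).\<close>
definition minuscule_for :: "ctype \<Rightarrow> nat \<Rightarrow> (nat \<Rightarrow> int) \<Rightarrow> ((nat \<Rightarrow> int) \<Rightarrow> (nat \<Rightarrow> int)) \<Rightarrow> bool" where
  "minuscule_for t n \<Lambda> w = (\<exists>ws. reduced_expr t n ws w \<and>
      (\<forall>q < length ws. wact t n (drop (Suc q) ws) \<Lambda> (ws ! q) = 1))"

definition minuscule :: "ctype \<Rightarrow> nat \<Rightarrow> ((nat \<Rightarrow> int) \<Rightarrow> (nat \<Rightarrow> int)) \<Rightarrow> bool" where
  "minuscule t n w = (\<exists>\<Lambda> \<in> weights n. minuscule_for t n \<Lambda> w)"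

definition strong_minuscule :: "ctype \<Rightarrow> nat \<Rightarrow> ((nat \<Rightarrow> int) \<Rightarrow> (nat \<Rightarrow> int)) \<Rightarrow> bool" where
  "strong_minuscule t n w = (\<exists>!\<Lambda>. \<Lambda> \<in> dominant n \<and> minuscule_for t n \<Lambda> w)"

definition Lambda_w :: "ctype \<Rightarrow> nat \<Rightarrow> ((nat \<Rightarrow> int) \<Rightarrow> (nat \<Rightarrow> int)) \<Rightarrow> (nat \<Rightarrow> int)" where
  "Lambda_w t n w = (THE \<Lambda>. \<Lambda> \<in> dominant n \<and> minuscule_for t n \<Lambda> w)"

definition Kset :: "ctype \<Rightarrow> nat \<Rightarrow> nat set" where
  "Kset t n = (case t of TA \<Rightarrow> Iset n | TD \<Rightarrow> Iset n | TB \<Rightarrow> {1} | TC \<Rightarrow> Iset n - {1})"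

definition vword :: "ctype \<Rightarrow> nat \<Rightarrow> nat \<Rightarrow> nat list" where
  "vword t n i = (case t of
      TB \<Rightarrow> rev [1..<n+1]
    | TD \<Rightarrow> (if i = 1 then [2] @ rev [3..<n+1] @ [1]
             else if i = 2 then [1] @ rev [3..<n+1] @ [2]
             else rev [i+1..<n+1] @ [1..<i+1])
    | _ \<Rightarrow> rev [i+1..<n+1] @ [1..<i+1])"

end

theory Submission
  imports Defs
begin


lemma Iset_iff: "j \<in> Iset n \<longleftrightarrow> 1 \<le> j \<and> j \<le> n" by (simp add: Iset_def)

lemma finite_Iset[simp]: "finite (Iset n)" by (simp add: Iset_def)

lemma adjacent_sym: "adjacent t i j = adjacent t j i"
  unfolding adjacent_def by auto

lemma cartan_diag: "i \<in> Iset n \<Longrightarrow> cartan t n i i = 2"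
  by (simp add: cartan_def)

lemma cartan_out1: "i \<notin> Iset n \<Longrightarrow> cartan t n i j = 0"
  by (simp add: cartan_def)

lemma cartan_out2: "j \<notin> Iset n \<Longrightarrow> cartan t n i j = 0"
  by (simp add: cartan_def)

lemma cartan_offdiag:
  assumes "i \<in> Iset n" "j \<in> Iset n" "i \<noteq> j"
  shows "(cartan t n i j = 0 \<and> cartan t n j i = 0 \<and> \<not> adjacent t i j) \<or>
         (adjacent t i j \<and> ((cartan t n i j = -1 \<and> cartan t n j i = -1) \<or>
          (cartan t n i j = -1 \<and> cartan t n j i = -2) \<or>
          (cartan t n i j = -2 \<and> cartan t n j i = -1)))"
proof -
  have c1: "cartan t n i j = (if \<not> adjacent t i j then 0 else if t = TB \<and> i = 1 \<and> j = 2 then -2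
     else if t = TC \<and> i = 2 \<and> j = 1 then -2 else -1)"
    using assms unfolding cartan_def by simp
  have c2: "cartan t n j i = (if \<not> adjacent t i j then 0 else if t = TB \<and> j = 1 \<and> i = 2 then -2
     else if t = TC \<and> j = 2 \<and> i = 1 then -2 else -1)"
    using assms adjacent_sym[of t i j] unfolding cartan_def by simp
  show ?thesis unfolding c1 c2 by auto
qed

lemma cartan_nonpos: "i \<noteq> j \<Longrightarrow> cartan t n i j \<le> 0"
  unfolding cartan_def by auto

lemma cartan_adj: "i \<in> Iset n \<Longrightarrow> j \<in> Iset n \<Longrightarrow> i \<noteq> j \<Longrightarrow> adjacent t i j \<Longrightarrow> cartan t n i j \<le> -1"
  using cartan_offdiag[of i n j t] by auto

lemma cartan_nadj: "i \<noteq> j \<Longrightarrow> \<not> adjacent t i j \<Longrightarrow> cartan t n i j = 0"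
  unfolding cartan_def by auto

lemma cartan_zero_sym: "cartan t n i j = 0 \<Longrightarrow> cartan t n j i = 0"
  using cartan_offdiag[of i n j t]
  by (cases "i \<in> Iset n \<and> j \<in> Iset n \<and> i \<noteq> j") (auto simp: cartan_out1 cartan_out2 cartan_diag)

lemma wact_Nil[simp]: "wact t n [] = id" by (simp add: wact_def)
lemma wact_Cons[simp]: "wact t n (i # ws) = sref t n i \<circ> wact t n ws" by (simp add: wact_def)
lemma wact_append: "wact t n (xs @ ys) = wact t n xs \<circ> wact t n ys"
  by (induction xs) auto

lemma sref_sref[simp]: "i \<in> Iset n \<Longrightarrow> sref t n i (sref t n i l) = l"
  by (rule ext) (simp add: sref_def cartan_diag algebra_simps)

lemma wact_rev_cancel1: "set xs \<subseteq> Iset n \<Longrightarrow> wact t n (rev xs) (wact t n xs l) = l"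
proof (induction xs arbitrary: l)
  case (Cons x xs) then show ?case by (simp add: wact_append)
qed simp

lemma wact_rev_cancel2: "set xs \<subseteq> Iset n \<Longrightarrow> wact t n xs (wact t n (rev xs) l) = l"
  using wact_rev_cancel1[of "rev xs" n t l] by simp

lemma wact_inv_unique:
  assumes "set xs \<subseteq> Iset n" "set ys \<subseteq> Iset n" "wact t n xs = wact t n ys"
  shows "wact t n (rev xs) = wact t n (rev ys)"
proof
  fix l
  have "wact t n (rev xs) l = wact t n (rev xs) (wact t n ys (wact t n (rev ys) l))"
    using wact_rev_cancel2[OF assms(2)] by simp
  also have "\<dots> = wact t n (rev xs) (wact t n xs (wact t n (rev ys) l))" using assms(3) by simp
  also have "\<dots> = wact t n (rev ys) l" using wact_rev_cancel1[OF assms(1)] by simp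
  finally show "wact t n (rev xs) l = wact t n (rev ys) l" .
qed

lemma sref_comm:
  assumes "cartan t n i j = 0"
  shows "sref t n i \<circ> sref t n j = sref t n j \<circ> sref t n i"
proof -
  have "cartan t n j i = 0" using cartan_zero_sym assms by blast
  then show ?thesis using assms by (intro ext) (simp add: sref_def algebra_simps)
qed

lemma wlen_le: "ws \<in> words n \<Longrightarrow> wlen t n (wact t n ws) \<le> length ws"
  unfolding wlen_def by (rule Least_le) auto

lemma wlen_red:
  assumes "w \<in> weyl t n"
  shows "\<exists>ws\<in>words n. wact t n ws = w \<and> length ws = wlen t n w"
proof -
  obtain ws where "ws \<in> words n" "w = wact t n ws" using assms unfolding weyl_def by auto
  then have "\<exists>r. \<exists>ws \<in> words n. length ws = r \<and> wact t n ws = w" by auto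
  from LeastI_ex[OF this] show ?thesis unfolding wlen_def by auto
qed

lemma words_append[simp]: "xs @ ys \<in> words n \<longleftrightarrow> xs \<in> words n \<and> ys \<in> words n"
  by (auto simp: words_def)
lemma words_Cons[simp]: "x # ys \<in> words n \<longleftrightarrow> x \<in> Iset n \<and> ys \<in> words n"
  by (auto simp: words_def)
lemma words_Nil[simp]: "[] \<in> words n" by (simp add: words_def)
lemma words_rev[simp]: "rev xs \<in> words n \<longleftrightarrow> xs \<in> words n" by (simp add: words_def)
lemma words_set: "xs \<in> words n \<Longrightarrow> set xs \<subseteq> Iset n" by (simp add: words_def)

lemma weyl_wact: "ws \<in> words n \<Longrightarrow> wact t n ws \<in> weyl t n"
  unfolding weyl_def by auto

lemma wlen_sub:
  assumes "xs \<in> words n" "ys \<in> words n"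
  shows "wlen t n (wact t n (xs @ ys)) \<le> wlen t n (wact t n xs) + length ys"
proof -
  obtain rs where rs: "rs \<in> words n" "wact t n rs = wact t n xs" "length rs = wlen t n (wact t n xs)"
    using wlen_red[OF weyl_wact[OF assms(1)]] by blast
  have "wact t n (xs @ ys) = wact t n (rs @ ys)" using rs by (simp add: wact_append)
  then have "wlen t n (wact t n (xs @ ys)) \<le> length (rs @ ys)"
    using wlen_le[of "rs @ ys" n t] rs assms by simp
  then show ?thesis using rs by simp
qed

lemma wlen_sub2:
  assumes "xs \<in> words n" "ys \<in> words n"
  shows "wlen t n (wact t n (xs @ ys)) \<le> length xs + wlen t n (wact t n ys)"
proof -
  obtain rs where rs: "rs \<in> words n" "wact t n rs = wact t n ys" "length rs = wlen t n (wact t n ys)"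
    using wlen_red[OF weyl_wact[OF assms(2)]] by blast
  have "wact t n (xs @ ys) = wact t n (xs @ rs)" using rs by (simp add: wact_append)
  then have "wlen t n (wact t n (xs @ ys)) \<le> length (xs @ rs)"
    using wlen_le[of "xs @ rs" n t] rs assms by simp
  then show ?thesis using rs by simp
qed

lemma wlen_rev:
  assumes "xs \<in> words n"
  shows "wlen t n (wact t n (rev xs)) = wlen t n (wact t n xs)"
proof -
  have A: "wlen t n (wact t n (rev ys)) \<le> wlen t n (wact t n ys)" if ys: "ys \<in> words n" for ys
  proof -
    obtain rs where rs: "rs \<in> words n" "wact t n rs = wact t n ys" "length rs = wlen t n (wact t n ys)"
      using wlen_red[OF weyl_wact[OF ys]] by blast
    have "wact t n (rev rs) = wact t n (rev ys)"
      using wact_inv_unique[of rs n ys t] rs ys by (simp add: words_set)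
    then show ?thesis using wlen_le[of "rev rs" n t] rs by simp
  qed
  show ?thesis using A[OF assms] A[of "rev xs"] assms by fastforce
qed

definition reduced :: "ctype \<Rightarrow> nat \<Rightarrow> nat list \<Rightarrow> bool" where
  "reduced t n ws = (ws \<in> words n \<and> wlen t n (wact t n ws) = length ws)"

lemma reduced_expr_iff: "reduced_expr t n ws w \<longleftrightarrow> reduced t n ws \<and> wact t n ws = w"
  unfolding reduced_expr_def reduced_def by auto

lemma reduced_append:
  assumes "reduced t n (xs @ ys)"
  shows "reduced t n xs" "reduced t n ys"
proof -
  have w: "xs \<in> words n" "ys \<in> words n" using assms by (auto simp: reduced_def)
  have e: "wlen t n (wact t n (xs @ ys)) = length xs + length ys" using assms by (simp add: reduced_def)
  show "reduced t n xs" using wlen_sub[OF w, of t] wlen_le[OF w(2), of t] wlen_le[OF w(1), of t] e w unfolding reduced_def by linarith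
  show "reduced t n ys" using wlen_sub2[OF w, of t] wlen_le[OF w(1), of t] wlen_le[OF w(2), of t] e w unfolding reduced_def by linarith
qed

lemma reduced_rev: "reduced t n (rev xs) \<longleftrightarrow> reduced t n xs"
  unfolding reduced_def using wlen_rev[of xs n t] by auto

definition mc :: "ctype \<Rightarrow> nat \<Rightarrow> (nat \<Rightarrow> int) \<Rightarrow> nat list \<Rightarrow> bool" where
  "mc t n L ws = (\<forall>q < length ws. wact t n (drop (Suc q) ws) L (ws ! q) = 1)"

lemma mc_Nil[simp]: "mc t n L []" by (simp add: mc_def)

lemma mc_Cons0: "mc t n L (x # xs) \<longleftrightarrow> wact t n xs L x = 1 \<and> mc t n L xs"
  unfolding mc_def by (auto simp: less_Suc_eq_0_disj)

lemma mc_formula: "mc t n L xs \<Longrightarrow> wact t n xs L j = L j - sum_list (map (cartan t n j) xs)"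
proof (induction xs arbitrary: j)
  case (Cons x xs)
  then have "mc t n L xs" "wact t n xs L x = 1" by (auto simp: mc_Cons0)
  then show ?case using Cons by (simp add: sref_def)
qed simp

lemma mc_Cons: "mc t n L (x # xs) \<longleftrightarrow> mc t n L xs \<and> L x - sum_list (map (cartan t n x) xs) = 1"
  using mc_formula[of t n L xs x] by (auto simp: mc_Cons0)

lemma mc_appendD: "mc t n L (xs @ ys) \<Longrightarrow> mc t n L ys"
  by (induction xs) (auto simp: mc_Cons)

lemma mc_det: "mc t n L xs \<Longrightarrow> mc t n L' xs \<Longrightarrow> x \<in> set xs \<Longrightarrow> L x = L' x"
  by (induction xs) (auto simp: mc_Cons)

lemma mc_cong: "(\<forall>x\<in>set xs. L x = L' x) \<Longrightarrow> mc t n L xs \<Longrightarrow> mc t n L' xs"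
  by (induction xs) (auto simp: mc_Cons)

lemma minuscule_for_iff: "minuscule_for t n L w \<longleftrightarrow> (\<exists>ws. reduced t n ws \<and> wact t n ws = w \<and> mc t n L ws)"
  unfolding minuscule_for_def mc_def reduced_expr_iff by auto



definition cref :: "ctype \<Rightarrow> nat \<Rightarrow> nat \<Rightarrow> (nat \<Rightarrow> int) \<Rightarrow> (nat \<Rightarrow> int)" where
  "cref t n i h = h(i := h i - (\<Sum>j\<in>Iset n. h j * cartan t n j i))"

definition cact :: "ctype \<Rightarrow> nat \<Rightarrow> nat list \<Rightarrow> (nat \<Rightarrow> int) \<Rightarrow> (nat \<Rightarrow> int)" where
  "cact t n xs = foldr (\<lambda>i f. cref t n i \<circ> f) xs id"

definition pair :: "nat \<Rightarrow> (nat \<Rightarrow> int) \<Rightarrow> (nat \<Rightarrow> int) \<Rightarrow> int" where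
  "pair n l h = (\<Sum>j\<in>Iset n. l j * h j)"

definition supp :: "nat \<Rightarrow> (nat \<Rightarrow> int) \<Rightarrow> bool" where
  "supp n h = (\<forall>j. j \<notin> Iset n \<longrightarrow> h j = 0)"

definition pos :: "(nat \<Rightarrow> int) \<Rightarrow> bool" where
  "pos h = ((\<forall>j. 0 \<le> h j) \<and> (\<exists>j. h j \<noteq> 0))"

definition neg :: "(nat \<Rightarrow> int) \<Rightarrow> bool" where
  "neg h = pos (\<lambda>j. - h j)"

lemma cact_Nil[simp]: "cact t n [] = id" by (simp add: cact_def)
lemma cact_Cons[simp]: "cact t n (i # xs) = cref t n i \<circ> cact t n xs" by (simp add: cact_def)
lemma cact_append: "cact t n (xs @ ys) = cact t n xs \<circ> cact t n ys"
  by (induction xs) auto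

lemma sum_upd:
  fixes f h :: "nat \<Rightarrow> int"
  assumes "i \<in> Iset n"
  shows "(\<Sum>j\<in>Iset n. f j * (h(i := v)) j) = (\<Sum>j\<in>Iset n. f j * h j) + f i * (v - h i)"
proof -
  have "(\<Sum>j\<in>Iset n. f j * (h(i := v)) j) = (\<Sum>j\<in>Iset n. f j * h j + (if j = i then f i * (v - h i) else 0))"
    by (rule sum.cong) (auto simp: right_diff_distrib)
  also have "\<dots> = (\<Sum>j\<in>Iset n. f j * h j) + f i * (v - h i)"
    using assms by (simp add: sum.distrib)
  finally show ?thesis .
qed

lemma sum_upd2:
  fixes f h :: "nat \<Rightarrow> int"
  assumes "i \<in> Iset n"
  shows "(\<Sum>j\<in>Iset n. (h(i := v)) j * f j) = (\<Sum>j\<in>Iset n. h j * f j) + (v - h i) * f i"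
proof -
  have "(\<Sum>j\<in>Iset n. (h(i := v)) j * f j) = (\<Sum>j\<in>Iset n. h j * f j + (if j = i then (v - h i) * f i else 0))"
    by (rule sum.cong) (auto simp: left_diff_distrib)
  also have "\<dots> = (\<Sum>j\<in>Iset n. h j * f j) + (v - h i) * f i"
    using assms by (simp add: sum.distrib)
  finally show ?thesis .
qed

lemma sum_fundw: "j \<in> Iset n \<Longrightarrow> (\<Sum>x\<in>Iset n. fundw j x * h x) = h j"
proof -
  assume j: "j \<in> Iset n"
  have "(\<Sum>x\<in>Iset n. fundw j x * h x) = (\<Sum>x\<in>Iset n. if x = j then h j else 0)"
    by (rule sum.cong) (auto simp: fundw_def)
  then show ?thesis using j by simp
qed

lemma pair_cref:
  assumes "i \<in> Iset n"
  shows "pair n l (cref t n i h) = pair n (sref t n i l) h"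
proof -
  have "pair n l (cref t n i h) = (\<Sum>j\<in>Iset n. l j * h j) - l i * (\<Sum>j\<in>Iset n. h j * cartan t n j i)"
    unfolding pair_def cref_def sum_upd[OF assms] by (simp add: algebra_simps)
  also have "\<dots> = pair n (sref t n i l) h"
    unfolding pair_def sref_def by (simp add: algebra_simps sum_subtractf sum_distrib_left)
  finally show ?thesis .
qed

lemma pair_cact: "set xs \<subseteq> Iset n \<Longrightarrow> pair n l (cact t n xs h) = pair n (wact t n (rev xs) l) h"
proof (induction xs arbitrary: l)
  case (Cons x xs)
  then show ?case by (simp add: pair_cref wact_append)
qed simp

lemma supp_cref: "supp n h \<Longrightarrow> i \<in> Iset n \<Longrightarrow> supp n (cref t n i h)"
  unfolding supp_def cref_def by auto

lemma supp_cact: "supp n h \<Longrightarrow> set xs \<subseteq> Iset n \<Longrightarrow> supp n (cact t n xs h)"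
  by (induction xs) (auto simp: supp_cref)

lemma supp_fundw: "j \<in> Iset n \<Longrightarrow> supp n (fundw j)"
  unfolding supp_def fundw_def by auto

lemma pair_fundw: "j \<in> Iset n \<Longrightarrow> pair n (fundw j) h = h j"
  unfolding pair_def by (rule sum_fundw)

lemma supp_eq: "supp n h \<Longrightarrow> supp n g \<Longrightarrow> (\<forall>j\<in>Iset n. h j = g j) \<Longrightarrow> h = g"
  unfolding supp_def by (rule ext) metis

lemma cact_welldef:
  assumes "xs \<in> words n" "ys \<in> words n" "wact t n xs = wact t n ys" "supp n h"
  shows "cact t n xs h = cact t n ys h"
proof (rule supp_eq)
  show "supp n (cact t n xs h)" "supp n (cact t n ys h)"
    using assms by (auto simp: supp_cact words_set)
  have r: "wact t n (rev xs) = wact t n (rev ys)"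
    using wact_inv_unique assms by (simp add: words_set)
  show "\<forall>j\<in>Iset n. cact t n xs h j = cact t n ys h j"
    using pair_cact[of xs n "fundw _" t h] pair_cact[of ys n "fundw _" t h] assms r
    by (metis pair_fundw words_set)
qed

lemma cref_other: "j \<noteq> i \<Longrightarrow> cref t n i h j = h j"
  by (simp add: cref_def)

lemma cref_cref[simp]:
  assumes "i \<in> Iset n"
  shows "cref t n i (cref t n i h) = h"
proof -
  let ?X = "\<Sum>j\<in>Iset n. h j * cartan t n j i"
  have "(\<Sum>j\<in>Iset n. (h(i := h i - ?X)) j * cartan t n j i) = ?X + (- ?X) * 2"
    using sum_upd2[OF assms, of h "h i - ?X" "\<lambda>j. cartan t n j i"] assms by (simp add: cartan_diag)
  then show ?thesis unfolding cref_def by (intro ext) auto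
qed

lemma cact_rev_cancel: "set xs \<subseteq> Iset n \<Longrightarrow> cact t n (rev xs) (cact t n xs h) = h"
proof (induction xs arbitrary: h)
  case (Cons x xs)
  then show ?case by (simp add: cact_append)
qed simp

lemma cref_lin: "cref t n i (\<lambda>j. a * f j + b * g j) = (\<lambda>j. a * cref t n i f j + b * cref t n i g j)"
  unfolding cref_def
  by (rule ext) (simp add: algebra_simps sum.distrib sum_distrib_left)

lemma cact_lin: "cact t n xs (\<lambda>j. a * f j + b * g j) = (\<lambda>j. a * cact t n xs f j + b * cact t n xs g j)"
  by (induction xs) (auto simp: cref_lin)

lemma cact_neg: "cact t n xs (\<lambda>j. - f j) = (\<lambda>j. - cact t n xs f j)"
  using cact_lin[of t n xs "-1" f 0 f] by simp

lemma cref_self: "i \<in> Iset n \<Longrightarrow> cref t n i (fundw i) = (\<lambda>j. - fundw i j)"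
proof -
  assume i: "i \<in> Iset n"
  have "(\<Sum>j\<in>Iset n. fundw i j * cartan t n j i) = 2"
    using i sum_fundw[OF i, of "\<lambda>j. cartan t n j i"] by (simp add: cartan_diag)
  then show ?thesis unfolding cref_def by (intro ext) (auto simp: fundw_def)
qed

lemma cact_zero: "cact t n xs (\<lambda>j. 0) = (\<lambda>j. 0)"
  using cact_lin[of t n xs 0 "\<lambda>j. 0" 0 "\<lambda>j. 0"] by simp

lemma pos_fundw: "pos (fundw i)"
  unfolding pos_def fundw_def by auto

lemma pos_neg_excl: "pos h \<Longrightarrow> neg h \<Longrightarrow> False"
  unfolding pos_def neg_def by (metis add.inverse_neutral neg_0_le_iff_le order_antisym)

definition vec :: "nat \<Rightarrow> nat \<Rightarrow> int \<Rightarrow> int \<Rightarrow> nat \<Rightarrow> int" where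
  "vec s s' a b = (\<lambda>j. a * fundw s j + b * fundw s' j)"

lemma sum_vec:
  assumes "s \<in> Iset n" "s' \<in> Iset n" "s \<noteq> s'"
  shows "(\<Sum>j\<in>Iset n. vec s s' a b j * f j) = a * f s + b * f s'"
proof -
  have "(\<Sum>j\<in>Iset n. vec s s' a b j * f j) = (\<Sum>j\<in>Iset n. fundw s j * (a * f j)) + (\<Sum>j\<in>Iset n. fundw s' j * (b * f j))"
    unfolding vec_def by (simp add: algebra_simps sum.distrib)
  then show ?thesis using sum_fundw[OF assms(1)] sum_fundw[OF assms(2)] by simp
qed

lemma cref_vec1:
  assumes "s \<in> Iset n" "s' \<in> Iset n" "s \<noteq> s'"
  shows "cref t n s (vec s s' a b) = vec s s' (- a - b * cartan t n s' s) b"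
  unfolding cref_def using sum_vec[OF assms, of a b "\<lambda>j. cartan t n j s"] assms
  by (intro ext) (auto simp: vec_def fundw_def cartan_diag)

lemma cref_vec2:
  assumes "s \<in> Iset n" "s' \<in> Iset n" "s \<noteq> s'"
  shows "cref t n s' (vec s s' a b) = vec s s' a (- b - a * cartan t n s s')"
  unfolding cref_def using sum_vec[OF assms, of a b "\<lambda>j. cartan t n j s'"] assms
  by (intro ext) (auto simp: vec_def fundw_def cartan_diag)

lemma fundw_vec: "s \<noteq> s' \<Longrightarrow> fundw s = vec s s' 1 0"
  unfolding vec_def by simp

lemma braid2:
  assumes "cartan t n s s' = 0" 
  shows "wact t n [s, s'] = wact t n [s', s]"
  using sref_comm[OF assms] by simp

lemma braid3:
  assumes "s \<in> Iset n" "s' \<in> Iset n" "cartan t n s s' = -1" "cartan t n s' s = -1"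
  shows "wact t n [s, s', s] = wact t n [s', s, s']"
  using assms by (intro ext) (simp add: sref_def cartan_diag algebra_simps)

lemma braid4:
  assumes "s \<in> Iset n" "s' \<in> Iset n" "cartan t n s s' * cartan t n s' s = 2"
  shows "wact t n [s, s', s, s'] = wact t n [s', s, s', s]"
proof -
  have "(cartan t n s s' = -1 \<and> cartan t n s' s = -2) \<or> (cartan t n s s' = -2 \<and> cartan t n s' s = -1)"
    using cartan_offdiag[of s n s' t] assms cartan_diag[OF assms(1)] by (cases "s = s'") auto
  then show ?thesis using assms(1,2)
    by (elim disjE; intro ext) (simp_all add: sref_def cartan_diag algebra_simps)
qed



lemma sref_sref_comp: "i \<in> Iset n \<Longrightarrow> sref t n i \<circ> (sref t n i \<circ> f) = f"
  by (rule ext) simp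

lemma wact_dup: "x \<in> Iset n \<Longrightarrow> wact t n (A @ x # x # B) = wact t n (A @ B)"
  by (simp add: wact_append sref_sref_comp)

lemma wact_short:
  assumes "wact t n Q = wact t n (R @ [s])" "s \<in> Iset n"
  shows "wact t n (P @ Q @ [s]) = wact t n (P @ R)"
proof -
  have "\<And>y. wact t n Q y = wact t n R (sref t n s y)" using fun_cong[OF assms(1)] by (simp add: wact_append)
  then show ?thesis using assms(2) by (intro ext) (simp add: wact_append)
qed

lemma rank2:
  assumes s: "s \<in> Iset n" "s' \<in> Iset n" "s \<noteq> s'" and ys: "set ys \<subseteq> {s, s'}"
    and H1: "\<And>zs. set zs \<subseteq> {s,s'} \<Longrightarrow> wact t n zs = wact t n ys \<Longrightarrow> length ys \<le> length zs"
    and H2: "\<And>zs. set zs \<subseteq> {s,s'} \<Longrightarrow> wact t n zs = wact t n (ys @ [s]) \<Longrightarrow> length ys \<le> length zs"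
  shows "\<exists>a b. 0 \<le> a \<and> 0 \<le> b \<and> cact t n ys (fundw s) = vec s s' a b"
proof -
  have nodup: "ys \<noteq> A @ x # x # B" for A x B
  proof
    assume e: "ys = A @ x # x # B"
    then have x: "x \<in> Iset n" using ys s by auto
    have "wact t n (A @ B) = wact t n ys" using e wact_dup[OF x] by simp
    moreover have "set (A @ B) \<subseteq> {s,s'}" using ys e by auto
    ultimately have "length ys \<le> length (A @ B)" using H1 by blast
    then show False using e by simp
  qed
  have notlast: "ys \<noteq> A @ [s]" for A
  proof
    assume e: "ys = A @ [s]"
    have "wact t n A = wact t n (ys @ [s])" using e wact_dup[OF s(1), of t A "[]"] by simp
    moreover have "set A \<subseteq> {s,s'}" using ys e by auto
    ultimately have "length ys \<le> length A" using H2 by blast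
    then show False using e by simp
  qed
  have shape: "ys = [] \<or> ys = [s'] \<or> ys = [s,s'] \<or> ys = [s',s,s'] \<or> (\<exists>P. ys = P @ [s,s',s,s'])"
  proof (cases ys rule: rev_cases)
    case (snoc P1 y1)
    have y1: "y1 = s'" using snoc ys notlast[of P1] by auto
    show ?thesis
    proof (cases P1 rule: rev_cases)
      case (snoc P2 y2)
      have y2: "y2 = s" using snoc \<open>ys = P1 @ [y1]\<close> y1 ys nodup[of P2 s' "[]"] by auto
      show ?thesis
      proof (cases P2 rule: rev_cases)
        case (snoc P3 y3)
        have y3: "y3 = s'" using snoc \<open>ys = P1 @ [y1]\<close> \<open>P1 = P2 @ [y2]\<close> y1 y2 ys nodup[of P3 s "[s']"] by auto
        show ?thesis
        proof (cases P3 rule: rev_cases)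
          case (snoc P4 y4)
          have y4: "y4 = s" using snoc \<open>ys = P1 @ [y1]\<close> \<open>P1 = P2 @ [y2]\<close> \<open>P2 = P3 @ [y3]\<close> y1 y2 y3 ys
              nodup[of P4 s' "[s,s']"] by auto
          then show ?thesis using snoc \<open>ys = P1 @ [y1]\<close> \<open>P1 = P2 @ [y2]\<close> \<open>P2 = P3 @ [y3]\<close> y1 y2 y3 by auto
        qed (use \<open>ys = P1 @ [y1]\<close> \<open>P1 = P2 @ [y2]\<close> \<open>P2 = P3 @ [y3]\<close> y1 y2 y3 in auto)
      qed (use \<open>ys = P1 @ [y1]\<close> \<open>P1 = P2 @ [y2]\<close> y1 y2 in auto)
    qed (use \<open>ys = P1 @ [y1]\<close> y1 in auto)
  qed simp
  have sh: "False" if a: "set ys \<subseteq> {s,s'}" "wact t n Q = wact t n (R @ [s])" "ys = P @ Q"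
      "length R < length Q" "set R \<subseteq> {s,s'}" for P Q R
  proof -
    have "wact t n (P @ R) = wact t n (ys @ [s])" using wact_short[OF a(2) s(1), of P] a(3) by simp
    moreover have "set (P @ R) \<subseteq> {s,s'}" using a by auto
    ultimately have "length ys \<le> length (P @ R)" using H2 by blast
    then show False using a by simp
  qed
  have sub2: "set [s',s] \<subseteq> {s,s'}" "set [s,s'] \<subseteq> {s,s'}" "set [s',s,s'] \<subseteq> {s,s'}"
    "set [s] \<subseteq> {s,s'}" "set [s'] \<subseteq> {s,s'}" by auto
  have c: "(cartan t n s s' = 0 \<and> cartan t n s' s = 0) \<or> (cartan t n s s' = -1 \<and> cartan t n s' s = -1) \<or>
      (cartan t n s s' * cartan t n s' s = 2)"
    using cartan_offdiag[of s n s' t] s by auto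
  have v0: "cact t n [] (fundw s) = vec s s' 1 0" using fundw_vec[OF s(3)] by simp
  have v1: "cact t n [s'] (fundw s) = vec s s' 1 (- cartan t n s s')"
    using fundw_vec[OF s(3)] cref_vec2[OF s] by simp
  have v2: "cact t n [s,s'] (fundw s) = vec s s' (-1 + cartan t n s s' * cartan t n s' s) (- cartan t n s s')"
    using fundw_vec[OF s(3)] cref_vec2[OF s] cref_vec1[OF s] by simp
  have v3: "cact t n [s',s,s'] (fundw s) = vec s s' (-1 + cartan t n s s' * cartan t n s' s)
        (cartan t n s s' - (-1 + cartan t n s s' * cartan t n s' s) * cartan t n s s')"
    using fundw_vec[OF s(3)] cref_vec2[OF s] cref_vec1[OF s] by (simp add: algebra_simps)
  from c show ?thesis
  proof (elim disjE)
    assume c0: "cartan t n s s' = 0 \<and> cartan t n s' s = 0"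
    have b: "wact t n [s,s'] = wact t n ([s'] @ [s])" using braid2[of t n s s'] c0 by simp
    have "ys \<noteq> P @ [s,s']" for P using sh[of "[s,s']" "[s']" P, OF ys b] sub2 by auto
    then have "ys = [] \<or> ys = [s']" using shape by (metis append.left_neutral append_Cons append_Nil2 append_assoc)
    then have "cact t n ys (fundw s) = vec s s' 1 0" using v0 v1 c0 by auto
    then show ?thesis by (intro exI[of _ 1] exI[of _ 0]) simp
  next
    assume c1: "cartan t n s s' = -1 \<and> cartan t n s' s = -1"
    have b: "wact t n [s',s,s'] = wact t n ([s,s'] @ [s])" using braid3[of s n s' t] c1 s by simp
    have "ys \<noteq> P @ [s',s,s']" for P using sh[of "[s',s,s']" "[s,s']" P, OF ys b] sub2 by auto
    then have "ys = [] \<or> ys = [s'] \<or> ys = [s,s']" using shape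
      by (metis append.left_neutral append_Cons append_assoc)
    then have "cact t n ys (fundw s) = vec s s' 1 0 \<or> cact t n ys (fundw s) = vec s s' 1 1 \<or>
       cact t n ys (fundw s) = vec s s' 0 1" using v0 v1 v2 c1 by auto
    then show ?thesis by (elim disjE) (intro exI conjI; simp; fail)+
  next
    assume c2: "cartan t n s s' * cartan t n s' s = 2"
    have cc: "(cartan t n s s' = -1 \<and> cartan t n s' s = -2) \<or> (cartan t n s s' = -2 \<and> cartan t n s' s = -1)"
      using cartan_offdiag[of s n s' t] s c2 by auto
    have b: "wact t n [s,s',s,s'] = wact t n ([s',s,s'] @ [s])" using braid4[of s n s' t] c2 s by simp
    have "ys \<noteq> P @ [s,s',s,s']" for P using sh[of "[s,s',s,s']" "[s',s,s']" P, OF ys b] sub2 by auto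
    then have "ys = [] \<or> ys = [s'] \<or> ys = [s,s'] \<or> ys = [s',s,s']" using shape by blast
    then have "cact t n ys (fundw s) = vec s s' 1 0 \<or> cact t n ys (fundw s) = vec s s' 1 1 \<or>
       cact t n ys (fundw s) = vec s s' 1 2 \<or> cact t n ys (fundw s) = vec s s' 0 1 \<or> 
       cact t n ys (fundw s) = vec s s' 1 0" using v0 v1 v2 v3 cc by auto
    then show ?thesis by (elim disjE) (intro exI conjI; simp; fail)+
  qed
qed



lemma wlen_zero:
  assumes "ws \<in> words n" "wlen t n (wact t n ws) = 0"
  shows "wact t n ws = id"
  using wlen_red[OF weyl_wact[OF assms(1)], of t] assms(2) by auto

lemma L1_aux:
  "\<forall>ws s. ws \<in> words n \<longrightarrow> s \<in> Iset n \<longrightarrow> wlen t n (wact t n ws) = N \<longrightarrow>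
     wlen t n (wact t n ws) \<le> wlen t n (wact t n (ws @ [s])) \<longrightarrow> pos (cact t n ws (fundw s))"
proof (induction N rule: less_induct)
  case (less N)
  show ?case
  proof (intro allI impI)
    fix ws s
    assume ws: "ws \<in> words n" and s: "s \<in> Iset n" and N: "wlen t n (wact t n ws) = N"
      and le: "wlen t n (wact t n ws) \<le> wlen t n (wact t n (ws @ [s]))"
    define w where "w = wact t n ws"
    obtain rs where rs: "rs \<in> words n" "wact t n rs = w" "length rs = N"
      using wlen_red[OF weyl_wact[OF ws], of t] N w_def by auto
    have fs: "supp n (fundw s)" using supp_fundw[OF s] .
    show "pos (cact t n ws (fundw s))"
    proof (cases "N = 0")
      case True
      then have "rs = []" using rs by simp
      then have "cact t n ws (fundw s) = cact t n [] (fundw s)"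
        using cact_welldef[OF ws words_Nil _ fs] rs w_def by simp
      then show ?thesis using pos_fundw by simp
    next
      case False
      then obtain rs' s' where rs': "rs = rs' @ [s']" using rs by (cases rs rule: rev_cases) auto
      have s': "s' \<in> Iset n" "rs' \<in> words n" using rs rs' by auto
      have lrs': "wlen t n (wact t n rs') = N - 1"
      proof -
        have "wlen t n (wact t n rs') \<le> N - 1" using wlen_le[OF s'(2), of t] rs rs' by simp
        moreover have "N \<le> wlen t n (wact t n rs') + 1"
          using wlen_sub[OF s'(2), of "[s']" t] s' rs rs' N w_def by simp
        ultimately show ?thesis by linarith
      qed
      have ss': "s \<noteq> s'"
      proof
        assume ss: "s = s'"
        have e1: "\<And>y. wact t n ws y = wact t n rs' (sref t n s' y)"
          using rs rs' w_def by (metis comp_apply wact_append wact_Cons wact_Nil id_apply)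
        then have "wact t n (ws @ [s]) = wact t n rs'"
          using ss s' by (intro ext) (simp add: wact_append)
        then show False using le lrs' N False by simp
      qed
      define M where "M = (\<lambda>p. fst p \<in> words n \<and> set (snd p) \<subseteq> {s, s'} \<and>
          wact t n (fst p @ snd p) = w \<and> wlen t n (wact t n (fst p)) + length (snd p) = N)"
      have M0: "M (rs', [s'])" unfolding M_def using s' rs rs' lrs' False by simp
      obtain p where pM: "M p" and pmin: "\<And>q. M q \<Longrightarrow> wlen t n (wact t n (fst p)) \<le> wlen t n (wact t n (fst q))"
        using ex_has_least_nat[of M "(rs', [s'])" "\<lambda>p. wlen t n (wact t n (fst p))", OF M0] by blast
      obtain vs ys where p: "p = (vs, ys)" by (cases p)
      have vs: "vs \<in> words n" "set ys \<subseteq> {s, s'}" "wact t n (vs @ ys) = w"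
          "wlen t n (wact t n vs) + length ys = N"
        using pM p unfolding M_def by auto
      have ysw: "ys \<in> words n" using vs(2) s s' unfolding words_def by auto
      have dlt: "wlen t n (wact t n vs) < N"
        using pmin[OF M0] p lrs' False by simp
      have claim: "wlen t n (wact t n vs) \<le> wlen t n (wact t n (vs @ [x]))" if x: "x \<in> {s, s'}" for x
      proof (rule ccontr)
        assume "\<not> ?thesis"
        then have lt: "wlen t n (wact t n (vs @ [x])) < wlen t n (wact t n vs)" by simp
        have xI: "x \<in> Iset n" using x s s' by auto
        have e: "wact t n ((vs @ [x]) @ (x # ys)) = w"
          using vs(3) wact_dup[OF xI, of t vs ys] by simp
        have "N \<le> wlen t n (wact t n (vs @ [x])) + length (x # ys)"
          using wlen_sub[of "vs @ [x]" n "x # ys" t] e vs ysw xI N w_def by simp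
        then have "M (vs @ [x], x # ys)" unfolding M_def using vs xI x e lt by auto
        from pmin[OF this] p lt show False by simp
      qed
      have IH1: "pos (cact t n vs (fundw s))"
        using less.IH[OF dlt] vs(1) s claim[of s] by blast
      have IH2: "pos (cact t n vs (fundw s'))"
        using less.IH[OF dlt] vs(1) s' claim[of s'] by blast
      have H1: "length ys \<le> length zs" if "set zs \<subseteq> {s, s'}" "wact t n zs = wact t n ys" for zs
      proof -
        have zw: "zs \<in> words n" using that s s' unfolding words_def by auto
        have "wact t n (vs @ zs) = w" using vs(3) that by (simp add: wact_append)
        then have "N \<le> wlen t n (wact t n vs) + length zs"
          using wlen_sub[OF vs(1) zw, of t] N w_def by simp
        then show ?thesis using vs(4) by simp
      qed
      have H2: "length ys \<le> length zs" if "set zs \<subseteq> {s, s'}" "wact t n zs = wact t n (ys @ [s])" for zs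
      proof -
        have zw: "zs \<in> words n" using that s s' unfolding words_def by auto
        have "wact t n (vs @ zs) = wact t n (ws @ [s])" using vs(3) that w_def
          by (simp add: wact_append comp_assoc[symmetric])
        then have "N \<le> wlen t n (wact t n vs) + length zs"
          using wlen_sub[OF vs(1) zw, of t] N le by simp
        then show ?thesis using vs(4) by simp
      qed
      obtain a b where ab: "0 \<le> a" "0 \<le> b" "cact t n ys (fundw s) = vec s s' a b"
        using rank2[OF s s'(1) ss' vs(2) H1 H2] by blast
      have ab0: "a \<noteq> 0 \<or> b \<noteq> 0"
      proof (rule ccontr)
        assume "\<not> ?thesis"
        then have "cact t n ys (fundw s) = (\<lambda>j. 0)" using ab by (simp add: vec_def)
        then have "cact t n (rev ys) (cact t n ys (fundw s)) = (\<lambda>j. 0)" by (simp add: cact_zero)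
        then have "fundw s = (\<lambda>j. 0)" using cact_rev_cancel[of ys n t] ysw by (simp add: words_set)
        then show False by (metis fundw_def zero_neq_one)
      qed
      have eq: "cact t n (vs @ ys) (fundw s) = (\<lambda>j. a * cact t n vs (fundw s) j + b * cact t n vs (fundw s') j)"
        using ab(3) by (simp add: cact_append vec_def cact_lin)
      have "pos (cact t n (vs @ ys) (fundw s))"
        unfolding eq pos_def
      proof (intro conjI allI)
        fix j show "0 \<le> a * cact t n vs (fundw s) j + b * cact t n vs (fundw s') j"
          using IH1 IH2 ab unfolding pos_def by simp
      next
        show "\<exists>j. a * cact t n vs (fundw s) j + b * cact t n vs (fundw s') j \<noteq> 0"
        proof (cases "a = 0")
          case False
          obtain j where "cact t n vs (fundw s) j \<noteq> 0" using IH1 unfolding pos_def by blast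
          then have "0 < a * cact t n vs (fundw s) j" using IH1 ab False unfolding pos_def
            by (simp add: order_le_neq_trans)
          moreover have "0 \<le> b * cact t n vs (fundw s') j" using IH2 ab unfolding pos_def by simp
          ultimately show ?thesis by (intro exI[of _ j]) linarith
        next
          case True
          then have bp: "0 < b" using ab ab0 by simp
          obtain j where "cact t n vs (fundw s') j \<noteq> 0" using IH2 unfolding pos_def by blast
          then have "0 < b * cact t n vs (fundw s') j" using IH2 bp unfolding pos_def
            by (simp add: order_le_neq_trans)
          then show ?thesis using True by (intro exI[of _ j]) (metis add_0 less_irrefl mult_zero_left)
        qed
      qed
      moreover have "cact t n ws (fundw s) = cact t n (vs @ ys) (fundw s)"
        using cact_welldef[OF ws _ _ fs, of "vs @ ys"] vs ysw w_def by simp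
      ultimately show ?thesis by simp
    qed
  qed
qed

lemma L1:
  assumes "ws \<in> words n" "s \<in> Iset n" "wlen t n (wact t n ws) \<le> wlen t n (wact t n (ws @ [s]))"
  shows "pos (cact t n ws (fundw s))"
  using L1_aux assms by blast

lemma desc_neg:
  assumes "ws \<in> words n" "s \<in> Iset n" "wlen t n (wact t n (ws @ [s])) < wlen t n (wact t n ws)"
  shows "neg (cact t n ws (fundw s))"
proof -
  have w2: "ws @ [s] \<in> words n" using assms by simp
  have "wact t n ((ws @ [s]) @ [s]) = wact t n ws" using wact_dup[OF assms(2), of t ws "[]"] by simp
  then have "pos (cact t n (ws @ [s]) (fundw s))" using L1[OF w2 assms(2)] assms(3) by simp
  then show ?thesis using assms(2) by (simp add: neg_def cact_append cref_self cact_neg)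
qed

lemma pos_or_neg:
  assumes "ws \<in> words n" "s \<in> Iset n"
  shows "pos (cact t n ws (fundw s)) \<or> neg (cact t n ws (fundw s))"
  using L1[OF assms, of t] desc_neg[OF assms, of t] by linarith

lemma neg_desc:
  assumes "ws \<in> words n" "s \<in> Iset n" "neg (cact t n ws (fundw s))"
  shows "wlen t n (wact t n (ws @ [s])) < wlen t n (wact t n ws)"
  using L1[OF assms(1,2)] assms(3) pos_neg_excl by (meson not_le)

lemma pos_asc:
  assumes "ws \<in> words n" "s \<in> Iset n" "pos (cact t n ws (fundw s))"
  shows "wlen t n (wact t n ws) \<le> wlen t n (wact t n (ws @ [s]))"
  using desc_neg[OF assms(1,2)] assms(3) pos_neg_excl by (meson not_le)



definition coroot :: "ctype \<Rightarrow> nat \<Rightarrow> (nat \<Rightarrow> int) \<Rightarrow> bool" where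
  "coroot t n g = (\<exists>xs j. xs \<in> words n \<and> j \<in> Iset n \<and> g = cact t n xs (fundw j))"

lemma coroot_dich: "coroot t n g \<Longrightarrow> pos g \<or> neg g"
  unfolding coroot_def using pos_or_neg by blast

lemma coroot_cact: "coroot t n g \<Longrightarrow> xs \<in> words n \<Longrightarrow> coroot t n (cact t n xs g)"
  unfolding coroot_def by (metis cact_append comp_apply words_append)

lemma coroot_supp: "coroot t n g \<Longrightarrow> supp n g"
  unfolding coroot_def by (metis supp_cact supp_fundw words_set)

lemma pair_fundw2: "j \<in> Iset n \<Longrightarrow> pair n l (fundw j) = l j"
  unfolding pair_def using sum_fundw[of j n l] by (simp add: mult.commute)

lemma lemmaS:
  assumes g: "coroot t n g" "pos g" "neg (cref t n i g)" and i: "i \<in> Iset n"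
  shows "g = fundw i"
proof -
  have z: "g j = 0" if "j \<noteq> i" for j
  proof -
    have "g j \<ge> 0" using g(2) unfolding pos_def by simp
    moreover have "- cref t n i g j \<ge> 0" using g(3) unfolding neg_def pos_def by simp
    ultimately show ?thesis using cref_other[OF that] by simp
  qed
  define c where "c = g i"
  have gc: "g = (\<lambda>j. c * fundw i j + 0 * fundw i j)" using z unfolding c_def fundw_def by (intro ext) auto
  have cpos: "0 < c"
  proof -
    obtain j where "g j \<noteq> 0" using g(2) unfolding pos_def by blast
    then have "j = i" using z by blast
    then show ?thesis using g(2) \<open>g j \<noteq> 0\<close> unfolding pos_def c_def by (simp add: order_le_neq_trans)
  qed
  obtain xs j where xs: "xs \<in> words n" "j \<in> Iset n" "g = cact t n xs (fundw j)"
    using g(1) unfolding coroot_def by blast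
  have "fundw j = cact t n (rev xs) g" using cact_rev_cancel[of xs n t] xs by (simp add: words_set)
  also have "\<dots> = (\<lambda>k. c * cact t n (rev xs) (fundw i) k + 0 * cact t n (rev xs) (fundw i) k)"
    by (subst gc) (rule cact_lin)
  finally have "1 = c * cact t n (rev xs) (fundw i) j" by (metis add.right_neutral fundw_def mult_zero_left)
  then have "c = 1" using cpos by (metis pos_zmult_eq_1_iff)
  then show ?thesis using gc by simp
qed

definition gam :: "ctype \<Rightarrow> nat \<Rightarrow> nat list \<Rightarrow> nat \<Rightarrow> nat \<Rightarrow> int" where
  "gam t n ws p = cact t n (rev (drop (Suc p) ws)) (fundw (ws ! p))"

lemma find_switch: "P m \<Longrightarrow> \<not> P 0 \<Longrightarrow> \<exists>p<m. P (Suc p) \<and> \<not> P p"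
proof (induction m)
  case (Suc m)
  then show ?case by (cases "P m") (auto intro: less_SucI)
qed simp

lemma Nsub:
  assumes ws: "ws \<in> words n" and g: "coroot t n g" "pos g" "neg (cact t n ws g)"
  shows "\<exists>p<length ws. g = gam t n ws p"
proof -
  define mu where "mu q = cact t n (drop q ws) g" for q
  have "pos (mu (length ws))" using g by (simp add: mu_def)
  moreover have "\<not> pos (mu 0)" using g pos_neg_excl by (auto simp: mu_def)
  ultimately obtain p where p: "p < length ws" "pos (mu (Suc p))" "\<not> pos (mu p)"
    using find_switch[of "\<lambda>q. pos (mu q)"] by blast
  have dw: "drop (Suc p) ws \<in> words n" "drop p ws \<in> words n" "ws ! p \<in> Iset n"
    using ws p(1) unfolding words_def by (auto dest: in_set_dropD) 
  have cr: "coroot t n (mu (Suc p))" "coroot t n (mu p)"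
    using coroot_cact[OF g(1)] dw unfolding mu_def by auto
  have mp: "mu p = cref t n (ws ! p) (mu (Suc p))"
    unfolding mu_def using p(1) by (simp add: Cons_nth_drop_Suc[symmetric])
  have "neg (mu p)" using coroot_dich[OF cr(2)] p(3) by blast
  then have "mu (Suc p) = fundw (ws ! p)" using lemmaS[OF cr(1) p(2) _ dw(3)] mp by simp
  then have "g = cact t n (rev (drop (Suc p) ws)) (fundw (ws ! p))"
    using cact_rev_cancel[of "drop (Suc p) ws" n t g] dw by (simp add: mu_def words_set)
  then show ?thesis using p(1) unfolding gam_def by blast
qed

lemma reduced_drop: "reduced t n ws \<Longrightarrow> reduced t n (drop p ws)"
  using reduced_append(2)[of t n "take p ws" "drop p ws"] by simp

lemma reduced_take: "reduced t n ws \<Longrightarrow> reduced t n (take p ws)"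
  using reduced_append(1)[of t n "take p ws" "drop p ws"] by simp

lemma reduced_words: "reduced t n ws \<Longrightarrow> ws \<in> words n"
  by (simp add: reduced_def)

lemma cact_cancel2: "set xs \<subseteq> Iset n \<Longrightarrow> cact t n xs (cact t n (rev xs) h) = h"
  using cact_rev_cancel[of "rev xs" n t h] by simp

lemma Nsup:
  assumes r: "reduced t n ws" and p: "p < length ws"
  shows "pos (gam t n ws p)" "neg (cact t n ws (gam t n ws p))"
proof -
  have ws: "ws \<in> words n" using r by (simp add: reduced_def)
  let ?s = "ws ! p"
  have s: "?s \<in> Iset n" using ws p unfolding words_def by auto
  have dp: "drop p ws = ?s # drop (Suc p) ws" using p by (simp add: Cons_nth_drop_Suc)
  have dw: "drop (Suc p) ws \<in> words n" using ws unfolding words_def by (auto dest: in_set_dropD)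
  have rd: "reduced t n (rev (drop p ws))" using reduced_drop[OF r] reduced_rev by blast
  have "wlen t n (wact t n (rev (drop (Suc p) ws))) \<le> length (drop (Suc p) ws)"
    using wlen_le[of "rev (drop (Suc p) ws)" n t] dw by simp
  moreover have "wlen t n (wact t n (rev (drop (Suc p) ws) @ [?s])) = length (drop (Suc p) ws) + 1"
    using rd dp unfolding reduced_def by simp
  ultimately show "pos (gam t n ws p)" unfolding gam_def
    using L1[of "rev (drop (Suc p) ws)" n ?s t] dw s by simp
  have tk: "take (Suc p) ws = take p ws @ [?s]" using p by (simp add: take_Suc_conv_app_nth)
  have tw: "take p ws \<in> words n" using ws unfolding words_def by (auto dest: in_set_takeD)
  have rt: "reduced t n (take (Suc p) ws)" using reduced_take[OF r] by blast
  have "wlen t n (wact t n (take p ws)) \<le> length (take p ws)" using wlen_le[OF tw] by blast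
  moreover have "wlen t n (wact t n (take p ws @ [?s])) = length (take p ws) + 1"
    using rt tk unfolding reduced_def by simp
  ultimately have P: "pos (cact t n (take p ws) (fundw ?s))" using L1[OF tw s, of t] p by simp
  have "cact t n ws (gam t n ws p) = cact t n (take (Suc p) ws) (cact t n (drop (Suc p) ws) 
           (cact t n (rev (drop (Suc p) ws)) (fundw ?s)))"
    unfolding gam_def by (metis append_take_drop_id cact_append comp_apply)
  also have "\<dots> = cact t n (take (Suc p) ws) (fundw ?s)" using cact_cancel2 dw by (simp add: words_set)
  also have "\<dots> = (\<lambda>j. - cact t n (take p ws) (fundw ?s) j)"
    using tk s by (simp add: cact_append cref_self cact_neg)
  finally show "neg (cact t n ws (gam t n ws p))" using P unfolding neg_def by simp
qed

lemma mc_val: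
  assumes "ws \<in> words n" "q < length ws"
  shows "wact t n (drop (Suc q) ws) L (ws ! q) = pair n L (gam t n ws q)"
proof -
  have s: "ws ! q \<in> Iset n" using assms unfolding words_def by auto
  have dw: "set (rev (drop (Suc q) ws)) \<subseteq> Iset n" using assms unfolding words_def by (auto dest: in_set_dropD)
  show ?thesis unfolding gam_def using pair_cact[OF dw, of L t] pair_fundw2[OF s] by simp
qed

lemma mc_indep:
  assumes r1: "reduced t n ws1" and r2: "reduced t n ws2" and e: "wact t n ws1 = wact t n ws2"
    and m: "mc t n L ws1"
  shows "mc t n L ws2"
  unfolding mc_def
proof (intro allI impI)
  fix q assume q: "q < length ws2"
  have w1: "ws1 \<in> words n" and w2: "ws2 \<in> words n" using r1 r2 by (auto simp: reduced_def)
  let ?g = "gam t n ws2 q"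
  have cg: "coroot t n ?g" unfolding gam_def coroot_def using w2 q
    by (intro exI[of _ "rev (drop (Suc q) ws2)"] exI[of _ "ws2 ! q"])
       (auto simp: words_def dest: in_set_dropD)
  have "neg (cact t n ws2 ?g)" using Nsup[OF r2 q] by blast
  moreover have "cact t n ws2 ?g = cact t n ws1 ?g" using cact_welldef[OF w2 w1 e[symmetric] coroot_supp[OF cg]] .
  ultimately obtain p where p: "p < length ws1" "?g = gam t n ws1 p"
    using Nsub[OF w1 cg] Nsup[OF r2 q] by auto
  have "wact t n (drop (Suc q) ws2) L (ws2 ! q) = pair n L ?g" using mc_val[OF w2 q] .
  also have "\<dots> = wact t n (drop (Suc p) ws1) L (ws1 ! p)" using mc_val[OF w1 p(1)] p(2) by simp
  also have "\<dots> = 1" using m p(1) unfolding mc_def by blast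
  finally show "wact t n (drop (Suc q) ws2) L (ws2 ! q) = 1" .
qed



fun LO :: "nat list \<Rightarrow> nat list" where
  "LO [] = []"
| "LO (x # xs) = (if x \<in> set xs then LO xs else x # LO xs)"

fun rest :: "nat list \<Rightarrow> nat list" where
  "rest [] = []"
| "rest (x # xs) = (if x \<in> set xs then x # rest xs else rest xs)"

lemma set_LO[simp]: "set (LO xs) = set xs"
  by (induction xs) auto

lemma distinct_LO: "distinct (LO xs)"
  by (induction xs) auto

lemma length_rest_LO: "length (rest xs) + length (LO xs) = length xs"
  by (induction xs) auto

lemma set_rest: "set (rest xs) \<subseteq> set xs"
  by (induction xs) auto

lemma last_LO: "xs \<noteq> [] \<Longrightarrow> last (LO xs) = last xs"
proof (induction xs)
  case (Cons x xs)
  show ?case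
  proof (cases "xs = []")
    case False
    then have "LO xs \<noteq> []" by (metis set_LO set_empty)
    then show ?thesis using Cons False by auto
  qed simp
qed simp

lemma count_rest: "m \<in> set (rest xs) \<Longrightarrow> 2 \<le> count_list xs m"
proof (induction xs)
  case (Cons x xs)
  show ?case
  proof (cases "x \<in> set xs")
    case True
    show ?thesis
    proof (cases "m = x")
      case True
      then have "count_list xs m \<noteq> 0" using \<open>x \<in> set xs\<close> by (simp add: count_list_0_iff)
      then show ?thesis using True by simp
    next
      case False
      then have "m \<in> set (rest xs)" using Cons.prems \<open>x \<in> set xs\<close> by simp
      then show ?thesis using Cons.IH False by simp
    qed
  next
    case False
    then show ?thesis using Cons by simp
  qed
qed simp

lemma LO_distinct: "distinct xs \<Longrightarrow> LO xs = xs"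
  by (induction xs) auto

lemma sum_list_count_le:
  fixes f :: "nat \<Rightarrow> int"
  assumes "\<forall>x\<in>set xs. f x \<le> 0"
  shows "sum_list (map f xs) \<le> int (count_list xs m) * f m"
  using assms by (induction xs) (auto simp: algebra_simps)

lemma sum_list_le_set:
  fixes f :: "nat \<Rightarrow> int"
  assumes "\<forall>x\<in>set xs. f x \<le> 0"
  shows "sum_list (map f xs) \<le> sum f (set xs)"
  using assms
proof (induction xs)
  case (Cons x xs)
  then show ?case by (cases "x \<in> set xs") (auto simp: insert_absorb)
qed simp

lemma sref_wact_comm_pt:
  assumes "\<forall>m\<in>set A. cartan t n i m = 0"
  shows "sref t n i (wact t n A x) = wact t n A (sref t n i x)"
  using assms
proof (induction A arbitrary: x)
  case (Cons a A)
  then have c: "sref t n i \<circ> sref t n a = sref t n a \<circ> sref t n i" using sref_comm by auto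
  have "sref t n i (wact t n (a # A) x) = sref t n i (sref t n a (wact t n A x))" by simp
  also have "\<dots> = sref t n a (sref t n i (wact t n A x))" using fun_cong[OF c] by simp
  also have "\<dots> = sref t n a (wact t n A (sref t n i x))" using Cons by simp
  finally show ?case by simp
qed simp

lemma sref_wact_comm:
  assumes "\<forall>m\<in>set A. cartan t n i m = 0"
  shows "sref t n i \<circ> wact t n A = wact t n A \<circ> sref t n i"
  using sref_wact_comm_pt[OF assms] by (intro ext) simp

lemma decomp:
  assumes "ws \<in> words n" "mc t n L ws" "\<forall>j\<in>Iset n. 0 \<le> L j"
  shows "wact t n ws = wact t n (rest ws @ LO ws)"
  using assms
proof (induction ws)
  case (Cons i xs)
  have m: "mc t n L xs" "L i - sum_list (map (cartan t n i) xs) = 1" using Cons.prems(2) by (auto simp: mc_Cons)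
  have IH: "wact t n xs = wact t n (rest xs @ LO xs)" using Cons m by simp
  show ?case
  proof (cases "i \<in> set xs")
    case True
    then show ?thesis using IH by (simp add: wact_append)
  next
    case False
    have iI: "i \<in> Iset n" using Cons.prems by simp
    have nz: "cartan t n i m = 0" if mr: "m \<in> set (rest xs)" for m
    proof (rule ccontr)
      assume c: "cartan t n i m \<noteq> 0"
      have mx: "m \<in> set xs" using mr set_rest by blast
      have mI: "m \<in> Iset n" using mx Cons.prems(1) unfolding words_def by auto
      have "m \<noteq> i" using mx False by blast
      then have cm: "cartan t n i m \<le> -1" using cartan_offdiag[of i n m t] iI mI c by auto
      have "\<forall>x\<in>set xs. cartan t n i x \<le> 0" using False by (auto intro: cartan_nonpos)
      then have "sum_list (map (cartan t n i) xs) \<le> int (count_list xs m) * cartan t n i m"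
        by (rule sum_list_count_le)
      moreover have "2 \<le> count_list xs m" using count_rest[OF mr] .
      moreover have "int (count_list xs m) * cartan t n i m \<le> int (count_list xs m) * (-1)"
        using cm by (intro mult_left_mono) auto
      ultimately have "sum_list (map (cartan t n i) xs) \<le> -2" by linarith
      then show False using m(2) Cons.prems(3) iI by fastforce
    qed
    have "wact t n (i # xs) = sref t n i \<circ> wact t n (rest xs) \<circ> wact t n (LO xs)"
      using IH by (simp add: wact_append comp_assoc)
    also have "\<dots> = wact t n (rest xs) \<circ> sref t n i \<circ> wact t n (LO xs)"
      using sref_wact_comm[of "rest xs" t n i] nz by simp
    also have "\<dots> = wact t n (rest (i # xs) @ LO (i # xs))" using False by (simp add: wact_append comp_assoc)
    finally show ?thesis .
  qed
qed simp

definition struct :: "ctype \<Rightarrow> nat \<Rightarrow> (nat \<Rightarrow> int) \<Rightarrow> nat list \<Rightarrow> bool" where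
  "struct t n L xs = (\<forall>A j B. xs = A @ j # B \<longrightarrow> L j - (\<Sum>m\<in>set B. cartan t n j m) \<le> 1)"

lemma struct_LO:
  assumes "ws \<in> words n" "mc t n L ws"
  shows "struct t n L (LO ws)"
  using assms
proof (induction ws)
  case Nil then show ?case by (simp add: struct_def)
next
  case (Cons i xs)
  have m: "mc t n L xs" "L i - sum_list (map (cartan t n i) xs) = 1" using Cons.prems(2) by (auto simp: mc_Cons)
  have IH: "struct t n L (LO xs)" using Cons m by simp
  show ?case
  proof (cases "i \<in> set xs")
    case True then show ?thesis using IH by simp
  next
    case False
    have "\<forall>x\<in>set xs. cartan t n i x \<le> 0" using False by (auto intro: cartan_nonpos)
    then have s: "sum_list (map (cartan t n i) xs) \<le> (\<Sum>m\<in>set xs. cartan t n i m)" by (rule sum_list_le_set)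
    show ?thesis unfolding struct_def
    proof (intro allI impI)
      fix A j B assume e: "LO (i # xs) = A @ j # B"
      show "L j - (\<Sum>m\<in>set B. cartan t n j m) \<le> 1"
      proof (cases A)
        case Nil
        then have "j = i" "B = LO xs" using e False by auto
        then show ?thesis using s m(2) by simp
      next
        case (Cons a A')
        then have "LO xs = A' @ j # B" using e False by auto
        then show ?thesis using IH unfolding struct_def by blast
      qed
    qed
  qed
qed

fun bef :: "nat list \<Rightarrow> nat \<Rightarrow> nat \<Rightarrow> bool" where
  "bef [] a b = False"
| "bef (x # xs) a b = ((x = a \<and> b \<in> set xs) \<or> bef xs a b)"

lemma bef_append: "bef (A @ B) a b \<longleftrightarrow> bef A a b \<or> (a \<in> set A \<and> b \<in> set B) \<or> bef B a b"
  by (induction A) auto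

lemma bef_set: "bef xs a b \<Longrightarrow> a \<in> set xs \<and> b \<in> set xs"
  by (induction xs) auto

lemma bef_split: "distinct (A @ j # B) \<Longrightarrow> bef (A @ j # B) j m \<longleftrightarrow> m \<in> set B"
  by (auto simp: bef_append dest: bef_set)

lemma bef_antisym: "distinct xs \<Longrightarrow> bef xs a b \<Longrightarrow> \<not> bef xs b a"
  by (induction xs) (auto dest: bef_set)

lemma bef_total: "a \<in> set xs \<Longrightarrow> b \<in> set xs \<Longrightarrow> a \<noteq> b \<Longrightarrow> bef xs a b \<or> bef xs b a"
  by (induction xs) auto

lemma bef_Cons_other: "a \<noteq> x \<Longrightarrow> bef (x # xs) a b \<longleftrightarrow> bef xs a b"
  by simp

lemma bef_remove: "a \<noteq> x \<Longrightarrow> b \<noteq> x \<Longrightarrow> bef (A @ x # B) a b \<longleftrightarrow> bef (A @ B) a b"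
  by (auto simp: bef_append)

lemma reorder:
  assumes "distinct L" "distinct V" "set L = set V" "set L \<subseteq> Iset n"
    "\<forall>a\<in>set L. \<forall>b\<in>set L. a \<noteq> b \<longrightarrow> cartan t n a b \<noteq> 0 \<longrightarrow> (bef L a b \<longleftrightarrow> bef V a b)"
  shows "wact t n L = wact t n V"
  using assms
proof (induction L arbitrary: V)
  case Nil then show ?case by simp
next
  case (Cons x L')
  have "x \<in> set V" using Cons.prems by auto
  then obtain A B where V: "V = A @ x # B" by (meson split_list)
  have cA: "\<forall>a\<in>set A. cartan t n x a = 0"
  proof
    fix a assume a: "a \<in> set A"
    have ax: "a \<noteq> x" using a V Cons.prems(2) by auto
    have aL: "a \<in> set (x # L')" using a V Cons.prems(3) by auto
    have "bef V a x" using a V by (auto simp: bef_append)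
    moreover have "\<not> bef (x # L') a x" using ax Cons.prems(1) by (auto dest: bef_set)
    ultimately have "cartan t n a x = 0" using Cons.prems(5) aL ax by auto
    then show "cartan t n x a = 0" by (rule cartan_zero_sym)
  qed
  have "wact t n V = wact t n A \<circ> sref t n x \<circ> wact t n B" using V by (simp add: wact_append comp_assoc)
  also have "\<dots> = sref t n x \<circ> wact t n (A @ B)"
    using sref_wact_comm_pt[of A t n x] cA by (intro ext) (simp add: wact_append)
  finally have eV: "wact t n V = sref t n x \<circ> wact t n (A @ B)" .
  have "wact t n L' = wact t n (A @ B)"
  proof (rule Cons.IH)
    show "distinct L'" using Cons.prems by simp
    show "distinct (A @ B)" using Cons.prems V by auto
    have "x \<notin> set L'" using Cons.prems by simp
    moreover have "x \<notin> set (A @ B)" using Cons.prems(2) V by auto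
    ultimately show "set L' = set (A @ B)" using Cons.prems(3) V by auto
    show "set L' \<subseteq> Iset n" using Cons.prems by auto
    show "\<forall>a\<in>set L'. \<forall>b\<in>set L'. a \<noteq> b \<longrightarrow> cartan t n a b \<noteq> 0 \<longrightarrow> bef L' a b = bef (A @ B) a b"
    proof (intro ballI impI)
      fix a b assume ab: "a \<in> set L'" "b \<in> set L'" "a \<noteq> b" "cartan t n a b \<noteq> 0"
      have "a \<noteq> x" "b \<noteq> x" using ab Cons.prems(1) by auto
      then show "bef L' a b = bef (A @ B) a b"
        using Cons.prems(5) ab V bef_remove[of a x b A B] by auto
    qed
  qed
  then show ?case using eV by simp
qed

lemma sum_mono2_neg:
  fixes f :: "nat \<Rightarrow> int"
  assumes "finite B" "A \<subseteq> B" "\<forall>b\<in>B. f b \<le> 0"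
  shows "sum f B \<le> sum f A"
proof -
  have "sum f B = sum f (B - A) + sum f A" using sum.subset_diff[OF assms(2,1)] by simp
  moreover have "sum f (B - A) \<le> 0" using assms(3) by (intro sum_nonpos) auto
  ultimately show ?thesis by simp
qed

lemma orient:
  fixes nx :: "nat \<Rightarrow> nat" and ds :: "nat \<Rightarrow> nat"
  assumes L: "distinct L" "set L = Iset n" "L \<noteq> []" "last L = k" "struct t n Lam L"
    and nonneg: "\<forall>j\<in>Iset n. 0 \<le> Lam j"
    and N1: "\<forall>j\<in>Iset n. j \<noteq> k \<longrightarrow> nx j \<in> Iset n \<and> nx j \<noteq> j \<and> adjacent t j (nx j) \<and> ds (nx j) + 1 = ds j"
    and N2: "\<forall>j\<in>Iset n. ds j = 0 \<longleftrightarrow> j = k"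
  shows "\<forall>j\<in>Iset n. ds j = d \<longrightarrow> j \<noteq> k \<longrightarrow> Lam j = 0 \<and> cartan t n j (nx j) = -1 \<and> bef L j (nx j) \<and>
           (\<forall>m\<in>Iset n. adjacent t j m \<and> m \<noteq> j \<and> m \<noteq> nx j \<longrightarrow> bef L m j)"
proof (induction d rule: less_induct)
  case (less d)
  show ?case
  proof (intro ballI impI)
    fix j assume j: "j \<in> Iset n" "ds j = d" "j \<noteq> k"
    obtain A B where AB: "L = A @ j # B" using j L(2) by (metis split_list)
    have nj: "nx j \<in> Iset n" "nx j \<noteq> j" "adjacent t j (nx j)" "ds (nx j) + 1 = ds j" using N1 j by auto
    have nB: "nx j \<in> set B"
    proof (cases "ds (nx j) = 0")
      case True
      then have "nx j = k" using N2 nj by auto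
      moreover have Bn: "B \<noteq> []" using AB L(4) j(3) by auto
      moreover have "last B = k" using AB L(4) Bn by simp
      ultimately show ?thesis using last_in_set[OF Bn] by simp
    next
      case False
      then have "nx j \<noteq> k" using N2 nj by auto
      moreover have "ds (nx j) < d" using nj j by simp
      ultimately have IHm: "\<forall>m\<in>Iset n. adjacent t (nx j) m \<and> m \<noteq> nx j \<and> m \<noteq> nx (nx j) \<longrightarrow> bef L m (nx j)"
        using less.IH nj(1) by blast
      have "nx (nx j) \<noteq> j"
      proof
        assume "nx (nx j) = j"
        then have "ds j + 1 = ds (nx j)" using N1 nj(1) \<open>nx j \<noteq> k\<close> by metis
        then show False using nj(4) by simp
      qed
      then have "bef L j (nx j)" using IHm j(1) nj adjacent_sym by metis
      then show ?thesis using bef_split AB L(1) by blast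
    qed
    have s: "Lam j - (\<Sum>m\<in>set B. cartan t n j m) \<le> 1" using L(5) AB unfolding struct_def by blast
    have dB: "j \<notin> set B" "set B \<subseteq> Iset n" using L(1,2) AB by auto
    have nonposB: "\<forall>m\<in>set B. cartan t n j m \<le> 0" using dB by (auto intro: cartan_nonpos)
    have c1: "cartan t n j (nx j) \<le> -1" using cartan_adj[OF j(1) nj(1) nj(2)[symmetric] nj(3)] .
    have sub: "(\<Sum>m\<in>set B. cartan t n j m) \<le> cartan t n j (nx j)"
    proof -
      have "(\<Sum>m\<in>set B. cartan t n j m) \<le> (\<Sum>m\<in>{nx j}. cartan t n j m)"
        using nB nonposB by (intro sum_mono2_neg) auto
      then show ?thesis by simp
    qed
    have Lj: "0 \<le> Lam j" using nonneg j(1) by blast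
    have L0: "Lam j = 0" using s sub c1 Lj by linarith
    have cm1: "cartan t n j (nx j) = -1" using s sub c1 Lj by linarith
    have other: "bef L m j" if m: "m \<in> Iset n" "adjacent t j m" "m \<noteq> j" "m \<noteq> nx j" for m
    proof -
      have "m \<notin> set B"
      proof
        assume mB: "m \<in> set B"
        have cm: "cartan t n j m \<le> -1" using cartan_adj[OF j(1) m(1) m(3)[symmetric] m(2)] .
        have "(\<Sum>m\<in>set B. cartan t n j m) \<le> (\<Sum>m\<in>{nx j, m}. cartan t n j m)"
          using nB mB nonposB by (intro sum_mono2_neg) auto
        then have "(\<Sum>m\<in>set B. cartan t n j m) \<le> -2" using cm c1 m(4) by simp
        then show False using s Lj by linarith
      qed
      moreover have "m \<in> set L" using m L(2) by simp
      ultimately have "m \<in> set A" using AB m(3) by auto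
      then show ?thesis using AB by (auto simp: bef_append)
    qed
    show "Lam j = 0 \<and> cartan t n j (nx j) = -1 \<and> bef L j (nx j) \<and>
        (\<forall>m\<in>Iset n. adjacent t j m \<and> m \<noteq> j \<and> m \<noteq> nx j \<longrightarrow> bef L m j)"
      using L0 cm1 other nB AB by (auto simp: bef_append)
  qed
qed



lemma adjD: "adjacent TD i j \<longleftrightarrow> (3 \<le> i \<and> j = i + 1) \<or> (3 \<le> j \<and> i = j + 1) \<or>
   (i = 1 \<and> j = 3) \<or> (i = 3 \<and> j = 1) \<or> (i = 2 \<and> j = 3) \<or> (i = 3 \<and> j = 2)"
  unfolding adjacent_def by (auto simp: doubleton_eq_iff)

lemma adjC: "t \<noteq> TD \<Longrightarrow> adjacent t i j \<longleftrightarrow> i = j + 1 \<or> j = i + 1"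
  unfolding adjacent_def by auto

definition nxf :: "ctype \<Rightarrow> nat \<Rightarrow> nat \<Rightarrow> nat" where
  "nxf t k j = (if t = TD then
      (if k = 1 then (if j = 2 then 3 else if j = 3 then 1 else j - 1)
       else if k = 2 then (if j = 1 then 3 else if j = 3 then 2 else j - 1)
       else (if j > k then j - 1 else if j \<le> 2 then 3 else j + 1))
    else (if j < k then j + 1 else j - 1))"

definition dsf :: "ctype \<Rightarrow> nat \<Rightarrow> nat \<Rightarrow> nat" where
  "dsf t k j = (if t = TD then
      (if k = 1 then (if j = 1 then 0 else if j = 2 then 2 else j - 2)
       else if k = 2 then (if j = 2 then 0 else if j = 1 then 2 else j - 2)
       else (if j > k then j - k else if j \<le> 2 then k - 2 else k - j))
    else (if j < k then k - j else j - k))"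

lemma T1:
  assumes v: "valid_type t n" and k: "k \<in> Iset n" and j: "j \<in> Iset n" "j \<noteq> k"
  shows "nxf t k j \<in> Iset n \<and> nxf t k j \<noteq> j \<and> adjacent t j (nxf t k j) \<and> dsf t k (nxf t k j) + 1 = dsf t k j"
proof (cases "t = TD")
  case True
  then have n4: "4 \<le> n" using v by (simp add: valid_type_def)
  have kk: "k = 1 \<or> k = 2 \<or> 3 \<le> k" using k by (auto simp: Iset_iff)
  have jj: "1 \<le> j" "j \<le> n" using j by (auto simp: Iset_iff)
  from kk show ?thesis
  proof (elim disjE)
    assume k1: "k = 1"
    have "j = 2 \<or> j = 3 \<or> 4 \<le> j" using jj j(2) k1 by linarith
    then show ?thesis using True k1 n4 jj unfolding True nxf_def dsf_def adjD Iset_iff by auto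
  next
    assume k2: "k = 2"
    have "j = 1 \<or> j = 3 \<or> 4 \<le> j" using jj j(2) k2 by linarith
    then show ?thesis using True k2 n4 jj unfolding True nxf_def dsf_def adjD Iset_iff by auto
  next
    assume k3: "3 \<le> k"
    have kn: "k \<le> n" using k by (simp add: Iset_iff)
    have "j > k \<or> j \<le> 2 \<or> (3 \<le> j \<and> j < k)" using jj j(2) by linarith
    then show ?thesis using True k3 kn n4 jj unfolding True nxf_def dsf_def adjD Iset_iff by auto
  qed
next
  case False
  have kn: "1 \<le> k" "k \<le> n" using k by (auto simp: Iset_iff)
  have jj: "1 \<le> j" "j \<le> n" using j by (auto simp: Iset_iff)
  have "j < k \<or> k < j" using j(2) by linarith
  then show ?thesis using False kn jj unfolding nxf_def dsf_def adjC[OF False] Iset_iff by auto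
qed

lemma T2:
  assumes "j \<in> Iset n" "k \<in> Iset n"
  shows "dsf t k j = 0 \<longleftrightarrow> j = k"
  using assms unfolding dsf_def Iset_iff by auto

lemma T3:
  assumes v: "valid_type t n" and k: "k \<in> Iset n" and ab: "a \<in> Iset n" "b \<in> Iset n" "a \<noteq> b" "adjacent t a b"
  shows "(a \<noteq> k \<and> b = nxf t k a) \<or> (b \<noteq> k \<and> a = nxf t k b)"
proof (cases "t = TD")
  case True
  have kk: "k = 1 \<or> k = 2 \<or> 3 \<le> k" using k by (auto simp: Iset_iff)
  have ad: "(3 \<le> a \<and> b = a + 1) \<or> (3 \<le> b \<and> a = b + 1) \<or>
   (a = 1 \<and> b = 3) \<or> (a = 3 \<and> b = 1) \<or> (a = 2 \<and> b = 3) \<or> (a = 3 \<and> b = 2)" using ab(4) True adjD by simp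
  from kk show ?thesis
  proof (elim disjE)
    assume "k = 1" then show ?thesis using ad True unfolding nxf_def by auto
  next
    assume "k = 2" then show ?thesis using ad True unfolding nxf_def by auto
  next
    assume "3 \<le> k" then show ?thesis using ad True unfolding nxf_def by auto
  qed
next
  case False
  have "b = a + 1 \<or> a = b + 1" using ab(4) adjC[OF False] by auto
  then show ?thesis using False unfolding nxf_def by auto
qed



lemma cartan_val:
  assumes "i \<in> Iset n" "j \<in> Iset n" "i \<noteq> j" "adjacent t i j"
  shows "cartan t n i j = (if t = TB \<and> i = 1 \<and> j = 2 then -2 else if t = TC \<and> i = 2 \<and> j = 1 then -2 else -1)"
  using assms unfolding cartan_def by simp

lemma T4:
  assumes v: "valid_type t n" and k: "k \<in> Kset t n" and j: "j \<in> Iset n" "j \<noteq> k"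
  shows "cartan t n j (nxf t k j) = -1"
proof -
  have kI: "k \<in> Iset n" using k v by (cases t) (auto simp: Kset_def valid_type_def Iset_iff)
  have a: "nxf t k j \<in> Iset n" "nxf t k j \<noteq> j" "adjacent t j (nxf t k j)" using T1[OF v kI j] by auto
  have "\<not> (t = TB \<and> j = 1 \<and> nxf t k j = 2)"
  proof
    assume "t = TB \<and> j = 1 \<and> nxf t k j = 2"
    then show False using k j by (simp add: Kset_def)
  qed
  moreover have "\<not> (t = TC \<and> j = 2 \<and> nxf t k j = 1)"
  proof
    assume h: "t = TC \<and> j = 2 \<and> nxf t k j = 1"
    then have "k \<noteq> 1" using k by (simp add: Kset_def)
    then show False using h j kI unfolding nxf_def by (auto split: if_splits simp: Iset_iff)
  qed
  ultimately show ?thesis using cartan_val[OF j(1) a(1) a(2)[symmetric] a(3)] by simp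
qed

lemma T5:
  assumes v: "valid_type t n" and k: "k \<in> Iset n" "k \<notin> Kset t n"
  shows "\<exists>j\<in>Iset n. j \<noteq> k \<and> cartan t n j (nxf t k j) \<noteq> -1"
proof (cases t)
  case TA then show ?thesis using k by (simp add: Kset_def)
next
  case TD then show ?thesis using k by (simp add: Kset_def)
next
  case TB
  then have n2: "2 \<le> n" using v by (simp add: valid_type_def)
  have k1: "k \<noteq> 1" using k TB by (simp add: Kset_def)
  have "nxf t k 1 = 2" using k k1 TB unfolding nxf_def by (auto simp: Iset_iff)
  moreover have "cartan t n 1 2 = -2" using TB n2 unfolding cartan_def adjacent_def by (simp add: Iset_iff)
  ultimately show ?thesis using k1 n2 by (intro bexI[of _ 1]) (auto simp: Iset_iff)
next
  case TC
  then have n2: "2 \<le> n" using v by (simp add: valid_type_def)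
  have k1: "k = 1" using k TC by (simp add: Kset_def)
  have "nxf t k 2 = 1" using k1 TC unfolding nxf_def by simp
  moreover have "cartan t n 2 1 = -2" using TC n2 unfolding cartan_def adjacent_def by (simp add: Iset_iff)
  ultimately show ?thesis using k1 n2 by (intro bexI[of _ 2]) (auto simp: Iset_iff)
qed

lemma bef_upt:
  assumes "a \<le> i" "i < j" "j < b"
  shows "bef [a..<b] i j"
proof -
  have "[a..<b] = [a..<i] @ [i..<b]" using assms upt_add_eq_append[of a i "b - i"] by simp
  also have "[i..<b] = i # [Suc i..<b]" using assms by (simp add: upt_conv_Cons)
  finally show ?thesis using assms by (simp add: bef_append)
qed

lemma bef_rev: "bef (rev xs) a b \<longleftrightarrow> bef xs b a"
  by (induction xs) (auto simp: bef_append)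

definition CF :: "nat \<Rightarrow> nat \<Rightarrow> nat list" where
  "CF n k = rev [k+1..<n+1] @ [1..<k+1]"

lemma CF_props:
  assumes "1 \<le> k" "k \<le> n"
  shows "distinct (CF n k)" "set (CF n k) = Iset n" "last (CF n k) = k"
  using assms unfolding CF_def Iset_def by auto

lemma CF_bef1: "1 \<le> a \<Longrightarrow> a < b \<Longrightarrow> b \<le> k \<Longrightarrow> bef (CF n k) a b"
  unfolding CF_def bef_append by (rule disjI2, rule disjI2, rule bef_upt) auto

lemma CF_bef2: "k < b \<Longrightarrow> b < a \<Longrightarrow> a \<le> n \<Longrightarrow> bef (CF n k) a b"
  unfolding CF_def bef_append bef_rev by (rule disjI1, rule bef_upt) auto

lemma CF_bef3: "k < a \<Longrightarrow> a \<le> n \<Longrightarrow> 1 \<le> b \<Longrightarrow> b \<le> k \<Longrightarrow> bef (CF n k) a b"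
  unfolding CF_def bef_append by (rule disjI2, rule disjI1) auto

definition okCF :: "ctype \<Rightarrow> nat \<Rightarrow> nat \<Rightarrow> bool" where
  "okCF t n k = (\<forall>j\<in>Iset n. j \<noteq> k \<longrightarrow> (j < nxf t k j \<and> nxf t k j \<le> k) \<or> (k < nxf t k j \<and> nxf t k j < j)
             \<or> (k < j \<and> 1 \<le> nxf t k j \<and> nxf t k j \<le> k))"

lemma T6:
  assumes v: "valid_type t n" and k: "k \<in> Kset t n"
  shows "distinct (vword t n k) \<and> set (vword t n k) = Iset n \<and> last (vword t n k) = k \<and>
    (\<forall>j\<in>Iset n. j \<noteq> k \<longrightarrow> bef (vword t n k) j (nxf t k j))"
proof -
  have kI: "k \<in> Iset n" using k v by (cases t) (auto simp: Kset_def valid_type_def Iset_iff)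
  then have k1: "1 \<le> k" "k \<le> n" by (auto simp: Iset_iff)
  have chain: ?thesis if cf: "vword t n k = CF n k"
    and o: "okCF t n k"
  proof -
    have "\<forall>j\<in>Iset n. j \<noteq> k \<longrightarrow> bef (CF n k) j (nxf t k j)"
    proof (intro ballI impI)
      fix j assume j: "j \<in> Iset n" "j \<noteq> k"
      then have jj: "1 \<le> j" "j \<le> n" by (auto simp: Iset_iff)
      show "bef (CF n k) j (nxf t k j)" using o j jj CF_bef1 CF_bef2 CF_bef3 unfolding okCF_def by blast
    qed
    then show ?thesis using CF_props[OF k1] cf by simp
  qed
  show ?thesis
  proof (cases t)
    case TA
    show ?thesis
    proof (rule chain)
      show "vword t n k = CF n k" using TA by (simp add: vword_def CF_def)
      show "okCF t n k" unfolding okCF_def using TA k1 unfolding nxf_def by (auto simp: Iset_iff)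
    qed
  next
    case TC
    show ?thesis
    proof (rule chain)
      show "vword t n k = CF n k" using TC by (simp add: vword_def CF_def)
      show "okCF t n k" unfolding okCF_def using TC k1 unfolding nxf_def by (auto simp: Iset_iff)
    qed
  next
    case TB
    then have kk: "k = 1" using k by (simp add: Kset_def)
    show ?thesis
    proof (rule chain)
      have "rev [1..<n+1] = rev [2..<n+1] @ [1]" using k1 kk by (simp add: upt_conv_Cons numeral_2_eq_2)
      moreover have "vword t n k = rev [1..<n+1]" using TB by (simp only: vword_def ctype.case)
      moreover have "CF n k = rev [2..<n+1] @ [1]" using kk by (simp only: CF_def) (simp add: numeral_2_eq_2)
      ultimately show "vword t n k = CF n k" by (simp only:)
      show "okCF t n k" unfolding okCF_def using TB k1 unfolding nxf_def by (auto simp: Iset_iff)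
    qed
  next
    case TD
    then have n4: "4 \<le> n" using v by (simp add: valid_type_def)
    have "k = 1 \<or> k = 2 \<or> 3 \<le> k" using k1 by linarith
    then show ?thesis
    proof (elim disjE)
      assume k3: "3 \<le> k"
      show ?thesis
      proof (rule chain)
        show "vword t n k = CF n k" using TD k3 by (simp add: vword_def CF_def)
        show "okCF t n k" unfolding okCF_def using TD k3 k1 unfolding nxf_def by (auto simp: Iset_iff)
      qed
    next
      assume kk: "k = 1"
      have vw: "vword t n k = [2] @ rev [3..<n+1] @ [1]" using TD kk by (simp add: vword_def)
      have s: "set (vword t n k) = Iset n" unfolding vw Iset_def using n4 by auto
      have d: "distinct (vword t n k)" unfolding vw by simp
      have l: "last (vword t n k) = k" using vw kk by simp
      have b: "bef (vword t n k) j (nxf t k j)" if j: "j \<in> Iset n" "j \<noteq> k" for j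
      proof -
        have "j = 2 \<or> j = 3 \<or> 4 \<le> j" using j kk by (auto simp: Iset_iff)
        then show ?thesis using j n4 TD kk unfolding vw nxf_def
          by (auto simp: bef_append bef_rev bef_upt Iset_iff)
      qed
      show ?thesis using s d l b by blast
    next
      assume kk: "k = 2"
      have vw: "vword t n k = [1] @ rev [3..<n+1] @ [2]" using TD kk by (simp add: vword_def)
      have s: "set (vword t n k) = Iset n" unfolding vw Iset_def using n4 by auto
      have d: "distinct (vword t n k)" unfolding vw by simp
      have l: "last (vword t n k) = k" using vw kk by simp
      have b: "bef (vword t n k) j (nxf t k j)" if j: "j \<in> Iset n" "j \<noteq> k" for j
      proof -
        have "j = 1 \<or> j = 3 \<or> 4 \<le> j" using j kk by (auto simp: Iset_iff)
        then show ?thesis using j n4 TD kk unfolding vw nxf_def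
          by (auto simp: bef_append bef_rev bef_upt Iset_iff)
      qed
      show ?thesis using s d l b by blast
    qed
  qed
qed



lemma mc_from_orient:
  assumes "distinct L" "L \<noteq> []" "last L = k"
    "\<forall>A j B. L = A @ j # B \<longrightarrow> j \<noteq> k \<longrightarrow> (\<Sum>m\<in>set B. cartan t n j m) = -1"
  shows "mc t n (fundw k) L"
  using assms
proof (induction L)
  case Nil then show ?case by simp
next
  case (Cons x xs)
  have s: "sum_list (map (cartan t n x) xs) = (\<Sum>m\<in>set xs. cartan t n x m)"
    using Cons.prems(1) by (simp add: sum_list_distinct_conv_sum_set)
  show ?case
  proof (cases "xs = []")
    case True
    then have "x = k" using Cons.prems by simp
    then show ?thesis using True by (simp add: mc_Cons fundw_def)
  next
    case False
    have lk: "last xs = k" using Cons.prems False by simp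
    have xk: "x \<noteq> k" using Cons.prems(1) lk False last_in_set by fastforce
    have "mc t n (fundw k) xs"
    proof (rule Cons.IH)
      show "distinct xs" "xs \<noteq> []" "last xs = k" using Cons.prems False lk by auto
      show "\<forall>A j B. xs = A @ j # B \<longrightarrow> j \<noteq> k \<longrightarrow> (\<Sum>m\<in>set B. cartan t n j m) = -1"
      proof (intro allI impI)
        fix A j B assume "xs = A @ j # B" "j \<noteq> k"
        then show "(\<Sum>m\<in>set B. cartan t n j m) = -1" using Cons.prems(4)[rule_format, of "x # A" j B] by simp
      qed
    qed
    moreover have "(\<Sum>m\<in>set xs. cartan t n x m) = -1" using Cons.prems(4)[rule_format, of "[]" x xs] xk by simp
    ultimately show ?thesis using s xk by (simp add: mc_Cons fundw_def)
  qed
qed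

lemma sum_orient:
  assumes "distinct L" "set L \<subseteq> Iset n" "L = A @ j # B" "nx \<in> set B"
    "\<forall>m\<in>Iset n. m \<noteq> j \<and> adjacent t j m \<and> m \<noteq> nx \<longrightarrow> m \<notin> set B" "cartan t n j nx = -1"
  shows "(\<Sum>m\<in>set B. cartan t n j m) = -1"
proof -
  have "(\<Sum>m\<in>set B. cartan t n j m) = cartan t n j nx + (\<Sum>m\<in>set B - {nx}. cartan t n j m)"
    using assms(4) by (simp add: sum.remove)
  also have "(\<Sum>m\<in>set B - {nx}. cartan t n j m) = 0"
  proof (rule sum.neutral, rule ballI)
    fix m assume m: "m \<in> set B - {nx}"
    have "m \<noteq> j" "m \<in> Iset n" using m assms(1,2,3) by auto
    then have "\<not> adjacent t j m" using assms(5) m by auto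
    then show "cartan t n j m = 0" using \<open>m \<noteq> j\<close> by (intro cartan_nadj) auto
  qed
  finally show ?thesis using assms(6) by simp
qed

lemma V_props:
  assumes v: "valid_type t n" and k: "k \<in> Kset t n"
  shows "distinct (vword t n k)" "set (vword t n k) = Iset n" "last (vword t n k) = k"
    "vword t n k \<noteq> []" "vword t n k \<in> words n" "length (vword t n k) = n" "k \<in> Iset n"
    "mc t n (fundw k) (vword t n k)"
    "\<forall>j\<in>Iset n. j \<noteq> k \<longrightarrow> bef (vword t n k) j (nxf t k j)"
proof -
  note T = T6[OF v k]
  show d: "distinct (vword t n k)" and s: "set (vword t n k) = Iset n" and l: "last (vword t n k) = k"
    and o: "\<forall>j\<in>Iset n. j \<noteq> k \<longrightarrow> bef (vword t n k) j (nxf t k j)"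
    using T by auto
  show kI: "k \<in> Iset n" using k v by (cases t) (auto simp: Kset_def valid_type_def Iset_iff)
  show ne: "vword t n k \<noteq> []" using s kI by auto
  show "vword t n k \<in> words n" using s by (simp add: words_def)
  show "length (vword t n k) = n" using distinct_card[OF d] s by (simp add: Iset_def)
  show "mc t n (fundw k) (vword t n k)"
  proof (rule mc_from_orient[OF d ne l], intro allI impI)
    fix A j B assume AB: "vword t n k = A @ j # B" and jk: "j \<noteq> k"
    have jI: "j \<in> Iset n" using AB s by auto
    have "bef (vword t n k) j (nxf t k j)" using o jI jk by blast
    then have nB: "nxf t k j \<in> set B" using bef_split[of A j B] AB d by simp
    have oth: "\<forall>m\<in>Iset n. m \<noteq> j \<and> adjacent t j m \<and> m \<noteq> nxf t k j \<longrightarrow> m \<notin> set B"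
    proof (intro ballI impI)
      fix m assume m: "m \<in> Iset n" "m \<noteq> j \<and> adjacent t j m \<and> m \<noteq> nxf t k j"
      then have "m \<noteq> k \<and> j = nxf t k m" using T3[OF v kI jI m(1)] by auto
      then have "bef (vword t n k) m j" using o m(1) by auto
      then have "\<not> bef (vword t n k) j m" using bef_antisym d by blast
      then show "m \<notin> set B" using bef_split[of A j B m] AB d by simp
    qed
    show "(\<Sum>m\<in>set B. cartan t n j m) = -1"
      using sum_orient[OF d _ AB nB oth T4[OF v k jI jk]] s by simp
  qed
qed

lemma fundw_dom: "k \<in> Iset n \<Longrightarrow> fundw k \<in> dominant n"
  unfolding dominant_def weights_def fundw_def by auto

lemma weights_eq: "L \<in> weights n \<Longrightarrow> L' \<in> weights n \<Longrightarrow> (\<forall>j\<in>Iset n. L j = L' j) \<Longrightarrow> L = L'"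
  unfolding weights_def by (rule ext) (case_tac "x \<in> Iset n"; auto)



lemma backward:
  assumes v: "valid_type t n" and red: "reduced t n ws" "wact t n ws = w"
    and L0: "L0 \<in> weights n" "mc t n L0 ws"
    and k: "k \<in> Kset t n" and u: "u \<in> weyl t n" "w = u \<circ> wact t n (vword t n k)"
    "wlen t n w = wlen t n u + n"
  shows "strong_minuscule t n w \<and> Lambda_w t n w = fundw k"
proof -
  let ?V = "vword t n k"
  note V = V_props[OF v k]
  obtain us where us: "us \<in> words n" "wact t n us = u" "length us = wlen t n u"
    using wlen_red[OF u(1)] by blast
  define zs where "zs = us @ ?V"
  have zw: "zs \<in> words n" using us V unfolding zs_def by simp
  have zact: "wact t n zs = w" using us u unfolding zs_def by (simp add: wact_append)
  have zred: "reduced t n zs" unfolding reduced_def using zw zact u(3) us V unfolding zs_def by simp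
  have key: "L = fundw k" if "L \<in> weights n" "mc t n L ws" for L
  proof -
    have "mc t n L zs" using mc_indep[OF red(1) zred _ that(2)] red zact by simp
    then have "mc t n L ?V" unfolding zs_def by (rule mc_appendD)
    then have "\<forall>x\<in>Iset n. L x = fundw k x" using mc_det[OF _ V(8)] V(2) by blast
    then show ?thesis using weights_eq[OF that(1)] fundw_dom[OF V(7)] by (simp add: dominant_def)
  qed
  have L0k: "L0 = fundw k" using key L0 by blast
  have ex: "fundw k \<in> dominant n \<and> minuscule_for t n (fundw k) w"
    using fundw_dom[OF V(7)] L0 L0k red unfolding minuscule_for_iff by blast
  have uniq: "L = fundw k" if LL: "L \<in> dominant n" "minuscule_for t n L w" for L
  proof -
    obtain ws' where ws': "reduced t n ws'" "wact t n ws' = w" "mc t n L ws'"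
      using LL(2) unfolding minuscule_for_iff by blast
    have "mc t n L ws" using mc_indep[OF ws'(1) red(1) _ ws'(3)] ws'(2) red(2) by simp
    then show ?thesis using key LL(1) by (simp add: dominant_def)
  qed
  have sm: "strong_minuscule t n w" unfolding strong_minuscule_def using ex uniq by blast
  have "Lambda_w t n w = fundw k" unfolding Lambda_w_def using ex uniq by blast
  then show ?thesis using sm by simp
qed

lemma forward:
  assumes v: "valid_type t n" and red: "reduced t n ws" "wact t n ws = w" and ne: "ws \<noteq> []"
    and sm: "strong_minuscule t n w"
  shows "last ws \<in> Kset t n \<and> (\<exists>u \<in> weyl t n. w = u \<circ> wact t n (vword t n (last ws)) \<and>
                             wlen t n w = wlen t n u + n) \<and> Lambda_w t n w = fundw (last ws)"
proof -
  let ?k = "last ws"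
  obtain L where L: "L \<in> dominant n" "minuscule_for t n L w"
    and Lu: "\<And>L'. L' \<in> dominant n \<Longrightarrow> minuscule_for t n L' w \<Longrightarrow> L' = L"
    using sm unfolding strong_minuscule_def by blast
  have LW: "Lambda_w t n w = L" unfolding Lambda_w_def using L Lu by blast
  obtain ws1 where ws1: "reduced t n ws1" "wact t n ws1 = w" "mc t n L ws1"
    using L(2) unfolding minuscule_for_iff by blast
  have mcw: "mc t n L ws" using mc_indep[OF ws1(1) red(1) _ ws1(3)] ws1(2) red(2) by simp
  have wsw: "ws \<in> words n" using red by (simp add: reduced_def)
  have nonneg: "\<forall>j\<in>Iset n. 0 \<le> L j" using L(1) by (simp add: dominant_def)
  have full: "set ws = Iset n"
  proof (rule ccontr)
    assume "set ws \<noteq> Iset n"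
    then obtain j where j: "j \<in> Iset n" "j \<notin> set ws" using wsw unfolding words_def by blast
    define L' where "L' = L(j := L j + 1)"
    have "L' \<in> dominant n" using L(1) j unfolding L'_def dominant_def weights_def by auto
    moreover have "mc t n L' ws" using mcw j by (intro mc_cong[of ws L L']) (auto simp: L'_def)
    then have "minuscule_for t n L' w" unfolding minuscule_for_iff using red by blast
    ultimately have "L' = L" using Lu by blast
    then show False unfolding L'_def by (metis fun_upd_same lessI less_irrefl add.commute
        zless_add1_eq add_cancel_left_right one_neq_zero)
  qed
  have kI: "?k \<in> Iset n" using full ne by (metis last_in_set)
  have dec: "wact t n ws = wact t n (rest ws @ LO ws)" using decomp[OF wsw mcw nonneg] .
  define LL where "LL = LO ws"
  have LL: "distinct LL" "set LL = Iset n" "LL \<noteq> []" "last LL = ?k" "struct t n L LL"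
  proof -
    show "distinct LL" unfolding LL_def by (rule distinct_LO)
    show s: "set LL = Iset n" unfolding LL_def using full by simp
    show "LL \<noteq> []" using s kI by auto
    show "last LL = ?k" unfolding LL_def using last_LO[OF ne] .
    show "struct t n L LL" unfolding LL_def using struct_LO[OF wsw mcw] .
  qed
  have Lk: "L ?k = 1"
  proof -
    have "mc t n L [?k]" using mcw mc_appendD[of t n L "butlast ws" "[?k]"] append_butlast_last_id[OF ne] by simp
    then show ?thesis by (simp add: mc_Cons)
  qed
  have N1: "\<forall>j\<in>Iset n. j \<noteq> ?k \<longrightarrow> nxf t ?k j \<in> Iset n \<and> nxf t ?k j \<noteq> j \<and> adjacent t j (nxf t ?k j)
       \<and> dsf t ?k (nxf t ?k j) + 1 = dsf t ?k j" using T1[OF v kI] by blast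
  have N2: "\<forall>j\<in>Iset n. dsf t ?k j = 0 \<longleftrightarrow> j = ?k" using T2[OF _ kI, of _ t] by auto
  have O: "L j = 0 \<and> cartan t n j (nxf t ?k j) = -1 \<and> bef LL j (nxf t ?k j)"
    if "j \<in> Iset n" "j \<noteq> ?k" for j
    using orient[OF LL nonneg N1 N2, of "dsf t ?k j"] that by blast
  have kK: "?k \<in> Kset t n"
  proof (rule ccontr)
    assume "?k \<notin> Kset t n"
    then obtain j where "j \<in> Iset n" "j \<noteq> ?k" "cartan t n j (nxf t ?k j) \<noteq> -1" using T5[OF v kI] by blast
    then show False using O by blast
  qed
  have Lf: "L = fundw ?k"
  proof (rule weights_eq)
    show "L \<in> weights n" using L(1) by (simp add: dominant_def)
    show "fundw ?k \<in> weights n" using fundw_dom[OF kI] by (simp add: dominant_def)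
    show "\<forall>j\<in>Iset n. L j = fundw ?k j" using O Lk by (auto simp: fundw_def)
  qed
  let ?V = "vword t n ?k"
  note V = V_props[OF v kK]
  have eqLV: "wact t n LL = wact t n ?V"
  proof (rule reorder[OF LL(1) V(1)])
    show "set LL = set ?V" using LL V by simp
    show "set LL \<subseteq> Iset n" using LL by simp
    show "\<forall>a\<in>set LL. \<forall>b\<in>set LL. a \<noteq> b \<longrightarrow> cartan t n a b \<noteq> 0 \<longrightarrow> bef LL a b = bef ?V a b"
    proof (intro ballI impI)
      fix a b assume ab: "a \<in> set LL" "b \<in> set LL" "a \<noteq> b" "cartan t n a b \<noteq> 0"
      have aI: "a \<in> Iset n" "b \<in> Iset n" using ab LL by auto
      have adj: "adjacent t a b" using ab(3,4) cartan_nadj by blast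
      from T3[OF v kI aI ab(3) adj] show "bef LL a b = bef ?V a b"
      proof (elim disjE conjE)
        assume "a \<noteq> ?k" "b = nxf t ?k a"
        then show ?thesis using O[OF aI(1)] V(9) aI by auto
      next
        assume h: "b \<noteq> ?k" "a = nxf t ?k b"
        then have "bef LL b a" "bef ?V b a" using O[OF aI(2)] V(9) aI by auto
        then show ?thesis using bef_antisym LL(1) V(1) by blast
      qed
    qed
  qed
  define u where "u = wact t n (rest ws)"
  have rw: "rest ws \<in> words n" using wsw set_rest unfolding words_def by blast
  have uW: "u \<in> weyl t n" unfolding u_def using weyl_wact[OF rw] .
  have wu: "w = u \<circ> wact t n ?V" using red(2) dec eqLV unfolding u_def LL_def by (simp add: wact_append)
  have lLL: "length LL = n" using distinct_card[OF LL(1)] LL(2) by (simp add: Iset_def)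
  have lw: "wlen t n w = length (rest ws) + n"
    using red length_rest_LO[of ws] lLL unfolding reduced_def LL_def by simp
  have "wlen t n u \<le> length (rest ws)" unfolding u_def using wlen_le[OF rw] .
  moreover have "wlen t n w \<le> wlen t n u + n"
    using wlen_sub[OF rw V(5), of t] wu V(6) unfolding u_def by (simp add: wact_append)
  ultimately have "wlen t n w = wlen t n u + n" using lw by linarith
  then show ?thesis using kK uW wu LW Lf by blast
qed

theorem lemma6p3:
  fixes t :: ctype and n :: nat and w :: "(nat \<Rightarrow> int) \<Rightarrow> (nat \<Rightarrow> int)" and ws :: "nat list"
  assumes "valid_type t n"
    and "w \<in> weyl t n"
    and "minuscule t n w"
    and "reduced_expr t n ws w"
    and "ws \<noteq> []"
  shows "(strong_minuscule t n w \<longleftrightarrow>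
           last ws \<in> Kset t n \<and>
           (\<exists>u \<in> weyl t n. w = u \<circ> wact t n (vword t n (last ws)) \<and>
                             wlen t n w = wlen t n u + n))
       \<and> (strong_minuscule t n w \<longrightarrow> Lambda_w t n w = fundw (last ws))"
proof -
  have red: "reduced t n ws" "wact t n ws = w" using assms(4) by (auto simp: reduced_expr_iff)
  obtain L0 where L0: "L0 \<in> weights n" "minuscule_for t n L0 w"
    using assms(3) unfolding minuscule_def by blast
  obtain ws0 where ws0: "reduced t n ws0" "wact t n ws0 = w" "mc t n L0 ws0"
    using L0(2) unfolding minuscule_for_iff by blast
  have mc0: "mc t n L0 ws" using mc_indep[OF ws0(1) red(1) _ ws0(3)] ws0(2) red(2) by simp
  show ?thesis
    using forward[OF assms(1) red assms(5)] backward[OF assms(1) red L0(1) mc0, of "last ws"] by blast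
qed

end
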